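(* Let $R$ be an arithmetic ring such that, for every maximal ideal $M$ of $R$, the ring $R_M$ is either a domain or a noncoherent ring. Then $\lambda\text{-}\dim(R)\le 2$.
   Context: All rings are commutative with identity. $R$ is arithmetic if $R_M$ is a valuation ring (ideals totally ordered by inclusion) for every maximal ideal $M$. For an $R$-module $E$, $\lambda_R(E)$ is the supremum of the $n$ for which there is an exact sequence $F_n\to\cdots\to F_0\to E\to0$ with $F_i$ free of finite rank ($-1$ if $E$ is not finitely generated); $\lambda\text{-}\dim(R)$ is the least $n$ (or $\infty$) such that $\lambda_R(E)\ge n$ implies $\lambda_R(E)=\infty$ for all $R$-modules $E$. *)

theory Defs
  imports "HOL-Algebra.Module" "HOL-Algebra.Ideal"
begin

definition loc_rel :: "('a, 'm) ring_scheme \<Rightarrow> 'a set \<Rightarrow> (('a \<times> 'a) \<times> ('a \<times> 'a)) set" where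
  "loc_rel R M = {((a, s), (b, t)). a \<in> carrier R \<and> s \<in> carrier R - M \<and>
       b \<in> carrier R \<and> t \<in> carrier R - M \<and>
       (\<exists>u \<in> carrier R - M. u \<otimes>\<^bsub>R\<^esub> a \<otimes>\<^bsub>R\<^esub> t = u \<otimes>\<^bsub>R\<^esub> b \<otimes>\<^bsub>R\<^esub> s)}"

definition loc_class :: "('a, 'm) ring_scheme \<Rightarrow> 'a set \<Rightarrow> 'a \<Rightarrow> 'a \<Rightarrow> ('a \<times> 'a) set" where
  "loc_class R M a s = loc_rel R M `` {(a, s)}"

text \<open>The ring of fractions R_M = S^{-1} R with S = R - M; operations on classes are
  defined via representatives (the union of the classes of all representative results,
  which is a single class by well-definedness).\<close>
definition loc_mult :: "('a, 'm) ring_scheme \<Rightarrow> 'a set \<Rightarrow> ('a \<times> 'a) set \<Rightarrow> ('a \<times> 'a) set \<Rightarrow> ('a \<times> 'a) set" where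
  "loc_mult R M P Q = \<Union>{loc_class R M (a \<otimes>\<^bsub>R\<^esub> b) (s \<otimes>\<^bsub>R\<^esub> t) | a s b t. (a, s) \<in> P \<and> (b, t) \<in> Q}"

definition loc_add :: "('a, 'm) ring_scheme \<Rightarrow> 'a set \<Rightarrow> ('a \<times> 'a) set \<Rightarrow> ('a \<times> 'a) set \<Rightarrow> ('a \<times> 'a) set" where
  "loc_add R M P Q = \<Union>{loc_class R M (a \<otimes>\<^bsub>R\<^esub> t \<oplus>\<^bsub>R\<^esub> b \<otimes>\<^bsub>R\<^esub> s) (s \<otimes>\<^bsub>R\<^esub> t) | a s b t. (a, s) \<in> P \<and> (b, t) \<in> Q}"

definition localization :: "('a, 'm) ring_scheme \<Rightarrow> 'a set \<Rightarrow> ('a \<times> 'a) set ring" where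
  "localization R M =
    \<lparr> carrier = (carrier R \<times> (carrier R - M)) // loc_rel R M,
      mult = loc_mult R M,
      one = loc_class R M \<one>\<^bsub>R\<^esub> \<one>\<^bsub>R\<^esub>,
      zero = loc_class R M \<zero>\<^bsub>R\<^esub> \<one>\<^bsub>R\<^esub>,
      add = loc_add R M \<rparr>"

definition valuation_ring :: "('c, 'm) ring_scheme \<Rightarrow> bool" where
  "valuation_ring S \<longleftrightarrow> cring S \<and> (\<forall>I J. ideal I S \<longrightarrow> ideal J S \<longrightarrow> I \<subseteq> J \<or> J \<subseteq> I)"

definition arithmetic_ring :: "('a, 'm) ring_scheme \<Rightarrow> bool" where
  "arithmetic_ring R \<longleftrightarrow> cring R \<and>
     (\<forall>M. maximalideal M R \<longrightarrow> valuation_ring (localization R M))"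

text \<open>R^k as extensional functions nat => carrier R, vanishing from index k on.\<close>
definition fvec :: "('a, 'm) ring_scheme \<Rightarrow> nat \<Rightarrow> (nat \<Rightarrow> 'a) set" where
  "fvec R k = {x. (\<forall>j<k. x j \<in> carrier R) \<and> (\<forall>j\<ge>k. x j = \<zero>\<^bsub>R\<^esub>)}"

definition matvec :: "('a, 'm) ring_scheme \<Rightarrow> (nat \<Rightarrow> nat \<Rightarrow> 'a) \<Rightarrow> nat \<Rightarrow> nat \<Rightarrow> (nat \<Rightarrow> 'a) \<Rightarrow> (nat \<Rightarrow> 'a)" where
  "matvec R A m k x = (\<lambda>r. if r < m then (\<Oplus>\<^bsub>R\<^esub> c \<in> {..<k}. A r c \<otimes>\<^bsub>R\<^esub> x c) else \<zero>\<^bsub>R\<^esub>)"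

definition lincomb :: "('a, 'b, 'm) module_scheme \<Rightarrow> nat \<Rightarrow> (nat \<Rightarrow> 'b) \<Rightarrow> (nat \<Rightarrow> 'a) \<Rightarrow> 'b" where
  "lincomb E k g x = (\<Oplus>\<^bsub>E\<^esub> j \<in> {..<k}. x j \<odot>\<^bsub>E\<^esub> g j)"

text \<open>lambda_ge R E n: there is an exact sequence F_n -> ... -> F_0 -> E -> 0 with
  F_i = R^(k i) free of finite rank; A i is the matrix of F_i -> F_(i-1) (1 <= i <= n),
  g describes F_0 -> E.  For n = 0 this just says that E is finitely generated.\<close>
definition lambda_ge :: "('a, 'm) ring_scheme \<Rightarrow> ('a, 'b, 'n) module_scheme \<Rightarrow> nat \<Rightarrow> bool" where
  "lambda_ge R E n \<longleftrightarrow>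
    (\<exists>(k :: nat \<Rightarrow> nat) (A :: nat \<Rightarrow> nat \<Rightarrow> nat \<Rightarrow> 'a) (g :: nat \<Rightarrow> 'b).
       (\<forall>j < k 0. g j \<in> carrier E) \<and>
       (\<forall>i\<in>{1..n}. \<forall>r < k (i - 1). \<forall>c < k i. A i r c \<in> carrier R) \<and>
       \<comment> \<open>exactness at E: F_0 -> E is surjective\<close>
       (\<forall>y \<in> carrier E. \<exists>x \<in> fvec R (k 0). y = lincomb E (k 0) g x) \<and>
       \<comment> \<open>exactness at F_0\<close>
       (1 \<le> n \<longrightarrow> (\<forall>x \<in> fvec R (k 0).
            lincomb E (k 0) g x = \<zero>\<^bsub>E\<^esub> \<longleftrightarrow> (\<exists>z \<in> fvec R (k 1). x = matvec R (A 1) (k 0) (k 1) z))) \<and>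
       \<comment> \<open>exactness at F_i, 1 <= i < n\<close>
       (\<forall>i. 1 \<le> i \<and> i < n \<longrightarrow> (\<forall>x \<in> fvec R (k i).
            matvec R (A i) (k (i - 1)) (k i) x = (\<lambda>_. \<zero>\<^bsub>R\<^esub>) \<longleftrightarrow>
            (\<exists>z \<in> fvec R (k (Suc i)). x = matvec R (A (Suc i)) (k i) (k (Suc i)) z))))"

definition lambda_infinite :: "('a, 'm) ring_scheme \<Rightarrow> ('a, 'b, 'n) module_scheme \<Rightarrow> bool" where
  "lambda_infinite R E \<longleftrightarrow> (\<forall>n. lambda_ge R E n)"

definition ideal_module :: "('c, 'm) ring_scheme \<Rightarrow> 'c set \<Rightarrow> ('c, 'c) module" where
  "ideal_module S I = \<lparr> carrier = I, mult = mult S, one = one S, zero = zero S, add = add S,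
     smult = mult S \<rparr>"

text \<open>S is coherent iff every finitely generated ideal is finitely presented.\<close>
definition coherent_ring :: "('c, 'm) ring_scheme \<Rightarrow> bool" where
  "coherent_ring S \<longleftrightarrow> (\<forall>I. ideal I S \<longrightarrow> lambda_ge S (ideal_module S I) 0
       \<longrightarrow> lambda_ge S (ideal_module S I) 1)"

end

theory Submission
  imports Defs
begin

definition isunit :: "('a, 'm) ring_scheme \<Rightarrow> 'a \<Rightarrow> bool" where
  "isunit R a \<longleftrightarrow> (\<exists>b\<in>carrier R. a \<otimes>\<^bsub>R\<^esub> b = \<one>\<^bsub>R\<^esub>)"

definition annR :: "('a, 'm) ring_scheme \<Rightarrow> 'a \<Rightarrow> 'a set" where
  "annR R p = {y \<in> carrier R. p \<otimes>\<^bsub>R\<^esub> y = \<zero>\<^bsub>R\<^esub>}"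

definition pmul :: "('a, 'm) ring_scheme \<Rightarrow> 'a \<Rightarrow> 'a set" where
  "pmul R g = {g \<otimes>\<^bsub>R\<^esub> v | v. v \<in> carrier R}"

inductive_set gspan :: "'s set \<Rightarrow> 'v \<Rightarrow> ('v \<Rightarrow> 'v \<Rightarrow> 'v) \<Rightarrow> ('s \<Rightarrow> 'v \<Rightarrow> 'v) \<Rightarrow> 'v set \<Rightarrow> 'v set"
  for S z ad sm G where
  gs_zero: "z \<in> gspan S z ad sm G"
| gs_gen: "g \<in> G \<Longrightarrow> g \<in> gspan S z ad sm G"
| gs_add: "x \<in> gspan S z ad sm G \<Longrightarrow> y \<in> gspan S z ad sm G \<Longrightarrow> ad x y \<in> gspan S z ad sm G"
| gs_sm: "c \<in> S \<Longrightarrow> x \<in> gspan S z ad sm G \<Longrightarrow> sm c x \<in> gspan S z ad sm G"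

lemma gspan_map:
  assumes sub: "gspan S z ad sm G \<subseteq> D"
    and hz: "h z = z'"
    and hadd: "\<And>x y. x \<in> D \<Longrightarrow> y \<in> D \<Longrightarrow> h (ad x y) = ad' (h x) (h y)"
    and hsm: "\<And>c x. c \<in> S \<Longrightarrow> x \<in> D \<Longrightarrow> h (sm c x) = sm' c (h x)"
    and x: "x \<in> gspan S z ad sm G"
  shows "h x \<in> gspan S z' ad' sm' (h ` G)"
  using x
proof (induction rule: gspan.induct)
  case gs_zero then show ?case using hz gspan.gs_zero by metis
next
  case (gs_gen g) then show ?case by (auto intro: gspan.gs_gen)
next
  case (gs_add x y)
  have "x \<in> D" "y \<in> D" using gs_add.hyps sub by auto
  then show ?case using gs_add.IH hadd by (auto intro: gspan.gs_add)
next
  case (gs_sm c x)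
  have "x \<in> D" using gs_sm.hyps sub by auto
  then show ?case using gs_sm hsm by (auto intro: gspan.gs_sm)
qed

lemma gspan_sub:
  assumes "z \<in> D" "G \<subseteq> D" "\<And>x y. x \<in> D \<Longrightarrow> y \<in> D \<Longrightarrow> ad x y \<in> D"
    "\<And>c x. c \<in> S \<Longrightarrow> x \<in> D \<Longrightarrow> sm c x \<in> D"
  shows "gspan S z ad sm G \<subseteq> D"
proof
  fix x assume "x \<in> gspan S z ad sm G"
  then show "x \<in> D" by (induction rule: gspan.induct) (use assms in auto)
qed

abbreviation sspan :: "('a, 'm) ring_scheme \<Rightarrow> 'a set \<Rightarrow> 'a set" where
  "sspan R G \<equiv> gspan (carrier R) \<zero>\<^bsub>R\<^esub> (add R) (mult R) G"

locale chain_cring = cring +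
  assumes chain: "a \<in> carrier R \<Longrightarrow> b \<in> carrier R \<Longrightarrow>
     (\<exists>c\<in>carrier R. b = a \<otimes> c) \<or> (\<exists>c\<in>carrier R. a = b \<otimes> c)"

context cring
begin

lemma isunit_left:
  assumes "a \<in> carrier R" "b \<in> carrier R" "isunit R (a \<otimes> b)"
  shows "isunit R a"
proof -
  obtain c where c: "c \<in> carrier R" "a \<otimes> b \<otimes> c = \<one>" using assms(3) unfolding isunit_def by auto
  then have "a \<otimes> (b \<otimes> c) = \<one>" using assms m_assoc by auto
  then show ?thesis unfolding isunit_def using assms c by auto
qed

lemma isunit_right:
  assumes "a \<in> carrier R" "b \<in> carrier R" "isunit R (a \<otimes> b)"
  shows "isunit R b"
  using isunit_left[of b a] assms m_comm by auto

lemma isunit_one: "isunit R \<one>"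
  unfolding isunit_def by (rule bexI[of _ \<one>]) auto

lemma isunit_cancel:
  assumes "x \<in> carrier R" "e \<in> carrier R" "isunit R e" "x \<otimes> e = \<zero>"
  shows "x = \<zero>"
proof -
  obtain f where f: "f \<in> carrier R" "e \<otimes> f = \<one>" using assms unfolding isunit_def by auto
  have "x = x \<otimes> (e \<otimes> f)" using f assms by simp
  also have "\<dots> = (x \<otimes> e) \<otimes> f" using f assms(1,2) by (simp add: m_assoc)
  also have "\<dots> = \<zero>" using assms(4) f by simp
  finally show ?thesis .
qed

lemma pmul_closed: "g \<in> carrier R \<Longrightarrow> pmul R g \<subseteq> carrier R"
  unfolding pmul_def by auto

lemma annR_sub: "annR R p \<subseteq> carrier R"
  unfolding annR_def by auto

end

context chain_cring
begin

lemma nonunit_add: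
  assumes "a \<in> carrier R" "b \<in> carrier R" "\<not> isunit R a" "\<not> isunit R b"
  shows "\<not> isunit R (a \<oplus> b)"
proof
  assume u: "isunit R (a \<oplus> b)"
  from chain[OF assms(1,2)] show False
  proof
    assume "\<exists>c\<in>carrier R. b = a \<otimes> c"
    then obtain c where c: "c \<in> carrier R" "b = a \<otimes> c" by auto
    have "a \<oplus> b = a \<otimes> (\<one> \<oplus> c)" using c assms by algebra
    then show False using isunit_left[of a "\<one> \<oplus> c"] u assms c by auto
  next
    assume "\<exists>c\<in>carrier R. a = b \<otimes> c"
    then obtain c where c: "c \<in> carrier R" "a = b \<otimes> c" by auto
    have "a \<oplus> b = b \<otimes> (\<one> \<oplus> c)" using c assms by algebra
    then show False using isunit_left[of b "\<one> \<oplus> c"] u assms c by auto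
  qed
qed

lemma one_minus_unit:
  assumes "r \<in> carrier R" "\<not> isunit R r"
  shows "isunit R (\<one> \<ominus> r)"
proof (rule ccontr)
  assume "\<not> isunit R (\<one> \<ominus> r)"
  then have "\<not> isunit R ((\<one> \<ominus> r) \<oplus> r)" using nonunit_add assms by auto
  moreover have "(\<one> \<ominus> r) \<oplus> r = \<one>" using assms by algebra
  ultimately show False using isunit_one by simp
qed

lemma nonunit_mult:
  assumes "a \<in> carrier R" "b \<in> carrier R" "\<not> isunit R a"
  shows "\<not> isunit R (a \<otimes> b)"
  using isunit_left assms by blast

lemma finite_divisor:
  assumes "finite G" "G \<subseteq> carrier R"
  shows "\<exists>g\<in>insert \<zero> G. \<forall>h\<in>G. \<exists>c\<in>carrier R. h = g \<otimes> c"
  using assms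
proof (induction G rule: finite_induct)
  case empty then show ?case by auto
next
  case (insert h G)
  have "G \<subseteq> carrier R" using insert.prems by auto
  then obtain g where g: "g \<in> insert \<zero> G" "\<forall>h\<in>G. \<exists>c\<in>carrier R. h = g \<otimes> c"
    using insert.IH by blast
  have gc: "g \<in> carrier R" "h \<in> carrier R" using g(1) insert by auto
  from chain[OF gc] show ?case
  proof
    assume "\<exists>c\<in>carrier R. h = g \<otimes> c"
    then show ?thesis using g by auto
  next
    assume "\<exists>c\<in>carrier R. g = h \<otimes> c"
    then obtain c where c: "c \<in> carrier R" "g = h \<otimes> c" by auto
    have "\<forall>h'\<in>insert h G. \<exists>c\<in>carrier R. h' = h \<otimes> c"
    proof
      fix h' assume "h' \<in> insert h G"
      then show "\<exists>c\<in>carrier R. h' = h \<otimes> c"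
      proof
        assume "h' = h" then show ?thesis using gc by (intro bexI[of _ \<one>]) auto
      next
        assume "h' \<in> G"
        then obtain d where d: "d \<in> carrier R" "h' = g \<otimes> d" using g by auto
        then have "h' = h \<otimes> (c \<otimes> d)" using c gc m_assoc by auto
        then show ?thesis using c d by auto
      qed
    qed
    then show ?thesis by auto
  qed
qed

lemma sspan_principal:
  assumes "finite G" "G \<subseteq> carrier R"
  shows "\<exists>g\<in>insert \<zero> G. sspan R G \<subseteq> pmul R g"
proof -
  obtain g where g: "g \<in> insert \<zero> G" "\<forall>h\<in>G. \<exists>c\<in>carrier R. h = g \<otimes> c"
    using finite_divisor assms by blast
  have gc: "g \<in> carrier R" using g assms by auto
  have "sspan R G \<subseteq> pmul R g"
  proof
    fix x assume "x \<in> sspan R G"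
    then show "x \<in> pmul R g"
    proof (induction rule: gspan.induct)
      case gs_zero then show ?case unfolding pmul_def using gc by (auto intro!: exI[of _ \<zero>])
    next
      case (gs_gen h) then show ?case using g unfolding pmul_def by auto
    next
      case (gs_add x y)
      then obtain u v where "u \<in> carrier R" "v \<in> carrier R" "x = g \<otimes> u" "y = g \<otimes> v"
        unfolding pmul_def by auto
      then show ?case unfolding pmul_def using gc by (auto simp: r_distr intro!: exI[of _ "u \<oplus> v"])
    next
      case (gs_sm c x)
      then obtain u where "u \<in> carrier R" "x = g \<otimes> u" unfolding pmul_def by auto
      then show ?case unfolding pmul_def using gc gs_sm
        by (auto intro!: exI[of _ "c \<otimes> u"] simp: m_lcomm)
    qed
  qed
  then show ?thesis using g by auto
qed

lemma ann_double:
  assumes cd: "c \<in> carrier R" "d \<in> carrier R" "c \<noteq> \<zero>" "d \<noteq> \<zero>"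
    and ad: "annR R d = pmul R c"
  shows "annR R c = pmul R d"
proof
  have cann: "c \<in> annR R d" using ad cd unfolding pmul_def by (auto intro!: exI[of _ \<one>])
  then have dc0: "d \<otimes> c = \<zero>" unfolding annR_def by auto
  show "pmul R d \<subseteq> annR R c"
  proof
    fix x assume "x \<in> pmul R d"
    then obtain v where v: "v \<in> carrier R" "x = d \<otimes> v" unfolding pmul_def by auto
    have "c \<otimes> (d \<otimes> v) = (d \<otimes> c) \<otimes> v" using cd(1,2) v(1) by algebra
    then show "x \<in> annR R c" using dc0 v cd unfolding annR_def by auto
  qed
  show "annR R c \<subseteq> pmul R d"
  proof
    fix x assume x: "x \<in> annR R c"
    then have xc: "x \<in> carrier R" "c \<otimes> x = \<zero>" unfolding annR_def by auto
    from chain[OF xc(1) cd(2)] show "x \<in> pmul R d"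
    proof
      assume "\<exists>y\<in>carrier R. x = d \<otimes> y"
      then show ?thesis unfolding pmul_def by auto
    next
      assume "\<exists>y\<in>carrier R. d = x \<otimes> y"
      then obtain y where y: "y \<in> carrier R" "d = x \<otimes> y" by auto
      show ?thesis
      proof (cases "isunit R y")
        case True
        then obtain y' where y': "y' \<in> carrier R" "y \<otimes> y' = \<one>" unfolding isunit_def by auto
        have "x = d \<otimes> y'" using y y' xc by (simp add: m_assoc)
        then show ?thesis unfolding pmul_def using y' by auto
      next
        case False
        from chain[OF y(1) cd(1)] show ?thesis
        proof
          assume "\<exists>w\<in>carrier R. c = y \<otimes> w"
          then obtain w where w: "w \<in> carrier R" "c = y \<otimes> w" by auto
          have "d \<otimes> w = \<zero>"
          proof -
            have "d \<otimes> w = x \<otimes> (y \<otimes> w)" using w y xc by (simp add: m_assoc)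
            also have "\<dots> = c \<otimes> x" using w y xc by (simp add: m_comm)
            finally show ?thesis using xc by simp
          qed
          then have "w \<in> pmul R c" using ad w unfolding annR_def by auto
          then obtain v where v: "v \<in> carrier R" "w = c \<otimes> v" unfolding pmul_def by auto
          have "c \<otimes> (\<one> \<ominus> y \<otimes> v) = c \<ominus> y \<otimes> (c \<otimes> v)" using v(1) y(1) cd(1) by algebra
          also have "\<dots> = c \<ominus> c"
          proof -
            have e1: "y \<otimes> (c \<otimes> v) = c" by (metis v(2) w(2))
            show ?thesis by (simp only: e1)
          qed
          also have "\<dots> = \<zero>" using cd by algebra
          finally have "c \<otimes> (\<one> \<ominus> y \<otimes> v) = \<zero>" .
          moreover have "isunit R (\<one> \<ominus> y \<otimes> v)"
            using one_minus_unit[OF _ nonunit_mult[OF y(1) v(1) False]] v y by simp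
          ultimately have "c = \<zero>" using isunit_cancel[of c "\<one> \<ominus> y \<otimes> v"] cd v y by simp
          then show ?thesis using cd by simp
        next
          assume "\<exists>w\<in>carrier R. y = c \<otimes> w"
          then obtain w where w: "w \<in> carrier R" "y = c \<otimes> w" by auto
          have "d = x \<otimes> (c \<otimes> w)" by (simp only: y(2) w(2))
          also have "\<dots> = (c \<otimes> x) \<otimes> w" using xc(1) w(1) cd(1) by algebra
          finally have "d = (c \<otimes> x) \<otimes> w" .
          then show ?thesis using xc(2) w(1) cd(4) by (metis l_null)
        qed
      qed
    qed
  qed
qed


lemma ann_L1:
  assumes cd: "c \<in> carrier R" "d \<in> carrier R" "c \<noteq> \<zero>" "d \<noteq> \<zero>"
    and ad: "annR R d = pmul R c" and ac: "annR R c = pmul R d"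
    and r: "r \<in> carrier R" "\<not> isunit R r" and y: "y \<in> carrier R" "d = r \<otimes> y"
  shows "annR R r = pmul R (c \<otimes> y)"
proof
  have "c \<in> pmul R c" unfolding pmul_def using cd by (auto intro!: exI[of _ \<one>])
  then have dc0: "d \<otimes> c = \<zero>" using ad unfolding annR_def by auto
  show "pmul R (c \<otimes> y) \<subseteq> annR R r"
  proof
    fix z assume "z \<in> pmul R (c \<otimes> y)"
    then obtain v where v: "v \<in> carrier R" "z = c \<otimes> y \<otimes> v" unfolding pmul_def by auto
    have "r \<otimes> z = r \<otimes> (c \<otimes> y \<otimes> v)" by (simp only: v(2))
    also have "\<dots> = (r \<otimes> y) \<otimes> c \<otimes> v" using v(1) r(1) y(1) cd(1) by algebra
    also have "\<dots> = \<zero>" using dc0 y(2)[symmetric] v cd by simp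
    finally show "z \<in> annR R r" unfolding annR_def using v cd y by auto
  qed
  show "annR R r \<subseteq> pmul R (c \<otimes> y)"
  proof
    fix z assume "z \<in> annR R r"
    then have z: "z \<in> carrier R" "r \<otimes> z = \<zero>" unfolding annR_def by auto
    have cyc: "c \<otimes> y \<in> carrier R" using cd y by simp
    from chain[OF cyc z(1)] show "z \<in> pmul R (c \<otimes> y)"
    proof
      assume "\<exists>t\<in>carrier R. z = c \<otimes> y \<otimes> t"
      then show ?thesis unfolding pmul_def by auto
    next
      assume "\<exists>u\<in>carrier R. c \<otimes> y = z \<otimes> u"
      then obtain u where u: "u \<in> carrier R" "c \<otimes> y = z \<otimes> u" by auto
      show ?thesis
      proof (cases "isunit R u")
        case True
        then obtain u' where u': "u' \<in> carrier R" "u \<otimes> u' = \<one>" unfolding isunit_def by auto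
        have "z = z \<otimes> (u \<otimes> u')" using u' z by simp
        also have "\<dots> = (z \<otimes> u) \<otimes> u'" using u u' z by (simp only: m_assoc)
        also have "\<dots> = c \<otimes> y \<otimes> u'" using u by simp
        finally show ?thesis unfolding pmul_def using u' by auto
      next
        case False
        have "d \<otimes> z = \<zero>"
        proof -
          have "d \<otimes> z = (r \<otimes> y) \<otimes> z" by (simp only: y(2))
          also have "\<dots> = y \<otimes> (r \<otimes> z)" using y(1) r(1) z(1) by algebra
          finally show ?thesis using z y by simp
        qed
        then have "z \<in> pmul R c" using ad z unfolding annR_def by auto
        then obtain w where w: "w \<in> carrier R" "z = c \<otimes> w" unfolding pmul_def by auto
        have "c \<otimes> (y \<ominus> w \<otimes> u) = c \<otimes> y \<ominus> (c \<otimes> w) \<otimes> u" using cd(1) y(1) w(1) u(1) by algebra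
        also have "\<dots> = (c \<otimes> w) \<otimes> u \<ominus> (c \<otimes> w) \<otimes> u" by (simp only: u(2) w(2))
        also have "\<dots> = \<zero>" using cd(1) w(1) u(1) by algebra
        finally have "y \<ominus> w \<otimes> u \<in> pmul R d" using ac cd y w u unfolding annR_def by auto
        then obtain v' where v': "v' \<in> carrier R" "y \<ominus> w \<otimes> u = d \<otimes> v'" unfolding pmul_def by auto
        have e1: "y \<otimes> (\<one> \<ominus> r \<otimes> v') = w \<otimes> u"
        proof -
          have "y \<otimes> (\<one> \<ominus> r \<otimes> v') = y \<ominus> (r \<otimes> y) \<otimes> v'" using y(1) r(1) v'(1) by algebra
          also have "\<dots> = y \<ominus> (y \<ominus> w \<otimes> u)" using y(2) v'(2) by simp
          also have "\<dots> = w \<otimes> u" using y(1) w(1) u(1) by algebra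
          finally show ?thesis .
        qed
        have "isunit R (\<one> \<ominus> r \<otimes> v')"
          using one_minus_unit[OF _ nonunit_mult[OF r(1) v'(1) r(2)]] r v' by simp
        then obtain e where e: "e \<in> carrier R" "(\<one> \<ominus> r \<otimes> v') \<otimes> e = \<one>"
          unfolding isunit_def by auto
        have ye: "y = w \<otimes> u \<otimes> e"
        proof -
          have "y = y \<otimes> ((\<one> \<ominus> r \<otimes> v') \<otimes> e)" using e y by simp
          also have "\<dots> = (y \<otimes> (\<one> \<ominus> r \<otimes> v')) \<otimes> e" using e y r v' by (simp only: m_assoc) (simp add: m_assoc)
          also have "\<dots> = w \<otimes> u \<otimes> e" using e1 by simp
          finally show ?thesis .
        qed
        have "c \<otimes> (w \<otimes> r) = \<zero>"
        proof -
          have "c \<otimes> (w \<otimes> r) = r \<otimes> (c \<otimes> w)" using cd(1) w(1) r(1) by algebra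
          then show ?thesis using w z by simp
        qed
        then have "w \<otimes> r \<in> pmul R d" using ac w r unfolding annR_def by auto
        then obtain m where m: "m \<in> carrier R" "w \<otimes> r = d \<otimes> m" unfolding pmul_def by auto
        have "(w \<otimes> r) \<otimes> (\<one> \<ominus> u \<otimes> e \<otimes> m) = w \<otimes> r \<ominus> (r \<otimes> (w \<otimes> u \<otimes> e)) \<otimes> m"
          using w(1) r(1) u(1) e(1) m(1) by algebra
        also have "\<dots> = w \<otimes> r \<ominus> d \<otimes> m" using ye y(2) by simp
        also have "\<dots> = \<zero>" using m w r cd(2) by (simp add: r_neg a_minus_def)
        finally have wr0: "(w \<otimes> r) \<otimes> (\<one> \<ominus> u \<otimes> e \<otimes> m) = \<zero>" .
        have "isunit R (\<one> \<ominus> u \<otimes> e \<otimes> m)"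
        proof -
          have "\<not> isunit R (u \<otimes> e)" using nonunit_mult[OF u(1) e(1) False] .
          then have "\<not> isunit R (u \<otimes> e \<otimes> m)" using nonunit_mult[of "u \<otimes> e" m] u e m by simp
          then show ?thesis using one_minus_unit[of "u \<otimes> e \<otimes> m"] u e m by simp
        qed
        then have "w \<otimes> r = \<zero>" using isunit_cancel[OF _ _ _ wr0] w r u e m cd(2) by simp
        moreover have "d = (w \<otimes> r) \<otimes> (u \<otimes> e)"
        proof -
          have "d = r \<otimes> (w \<otimes> u \<otimes> e)" using y(2) ye by simp
          also have "\<dots> = (w \<otimes> r) \<otimes> (u \<otimes> e)" using r(1) w(1) u(1) e(1) by algebra
          finally show ?thesis .
        qed
        ultimately have "d = \<zero>" using u e by simp
        then show ?thesis using cd by simp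
      qed
    qed
  qed
qed

lemma ann_all_principal:
  assumes cd: "c \<in> carrier R" "d \<in> carrier R" "c \<noteq> \<zero>" "d \<noteq> \<zero>"
    and ad: "annR R d = pmul R c"
    and r: "r \<in> carrier R"
  shows "\<exists>a\<in>carrier R. annR R r = pmul R a"
proof -
  have ac: "annR R c = pmul R d" using ann_double[OF cd ad] .
  have "c \<in> pmul R c" unfolding pmul_def using cd by (auto intro!: exI[of _ \<one>])
  then have dc0: "d \<otimes> c = \<zero>" using ad unfolding annR_def by auto
  show ?thesis
  proof (cases "isunit R r")
    case True
    then obtain r' where r': "r' \<in> carrier R" "r \<otimes> r' = \<one>" unfolding isunit_def by auto
    have "annR R r = pmul R \<zero>"
    proof
      show "annR R r \<subseteq> pmul R \<zero>"
      proof
        fix z assume "z \<in> annR R r"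
        then have z: "z \<in> carrier R" "r \<otimes> z = \<zero>" unfolding annR_def by auto
        have "z = \<zero>" using isunit_cancel[of z r] z r True by (simp add: m_comm)
        then show "z \<in> pmul R \<zero>" unfolding pmul_def by (auto intro!: exI[of _ \<zero>])
      qed
      show "pmul R \<zero> \<subseteq> annR R r" unfolding pmul_def annR_def using r by auto
    qed
    then show ?thesis by auto
  next
    case False
    from chain[OF r cd(2)] show ?thesis
    proof
      assume "\<exists>y\<in>carrier R. d = r \<otimes> y"
      then obtain y where y: "y \<in> carrier R" "d = r \<otimes> y" by auto
      show ?thesis using ann_L1[OF cd ad ac r False y] cd y by auto
    next
      assume "\<exists>q\<in>carrier R. r = d \<otimes> q"
      then obtain q where q: "q \<in> carrier R" "r = d \<otimes> q" by auto
      from chain[OF q(1) cd(1)] show ?thesis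
      proof
        assume "\<exists>w\<in>carrier R. c = q \<otimes> w"
        then obtain y' where y': "y' \<in> carrier R" "c = q \<otimes> y'" by auto
        have "annR R r = pmul R y'"
        proof
          show "pmul R y' \<subseteq> annR R r"
          proof
            fix z assume "z \<in> pmul R y'"
            then obtain v where v: "v \<in> carrier R" "z = y' \<otimes> v" unfolding pmul_def by auto
            have "r \<otimes> z = (d \<otimes> (q \<otimes> y')) \<otimes> v" using q v y' cd by (simp add: m_assoc)
            also have "\<dots> = \<zero>" using y'(2)[symmetric] dc0 v by simp
            finally show "z \<in> annR R r" unfolding annR_def using v y' by auto
          qed
          show "annR R r \<subseteq> pmul R y'"
          proof
            fix z assume "z \<in> annR R r"
            then have z: "z \<in> carrier R" "r \<otimes> z = \<zero>" unfolding annR_def by auto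
            have "d \<otimes> (q \<otimes> z) = \<zero>" using z q cd by (simp add: m_assoc)
            then have "q \<otimes> z \<in> pmul R c" using ad z q unfolding annR_def by auto
            then obtain v where v: "v \<in> carrier R" "q \<otimes> z = c \<otimes> v" unfolding pmul_def by auto
            have qz: "q \<otimes> (z \<ominus> y' \<otimes> v) = \<zero>"
            proof -
              have "q \<otimes> (z \<ominus> y' \<otimes> v) = q \<otimes> z \<ominus> (q \<otimes> y') \<otimes> v" using q(1) z(1) y'(1) v(1) by algebra
              also have "\<dots> = c \<otimes> v \<ominus> c \<otimes> v" by (simp only: v(2) y'(2)[symmetric])
              also have "\<dots> = \<zero>" using v(1) cd(1) by algebra
              finally show ?thesis .
            qed
            have zc: "z \<ominus> y' \<otimes> v \<in> carrier R" using z y' v by simp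
            show "z \<in> pmul R y'"
            proof (cases "isunit R q")
              case True
              then have "z \<ominus> y' \<otimes> v = \<zero>" using isunit_cancel[OF zc q(1) True] qz zc q by (simp add: m_comm)
              moreover have "z = (z \<ominus> y' \<otimes> v) \<oplus> y' \<otimes> v" using z(1) y'(1) v(1) by algebra
              ultimately have "z = y' \<otimes> v" using y'(1) v(1) by simp
              then show ?thesis unfolding pmul_def using v by auto
            next
              case qn: False
              have "annR R q = pmul R (d \<otimes> y')"
                using ann_L1[OF cd(2,1,4,3) ac ad q(1) qn y'] .
              then have "z \<ominus> y' \<otimes> v \<in> pmul R (d \<otimes> y')" using qz zc unfolding annR_def by auto
              then obtain t where t: "t \<in> carrier R" "z \<ominus> y' \<otimes> v = d \<otimes> y' \<otimes> t" unfolding pmul_def by auto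
              have "z = (z \<ominus> y' \<otimes> v) \<oplus> y' \<otimes> v" using z(1) y'(1) v(1) by algebra
              also have "\<dots> = d \<otimes> y' \<otimes> t \<oplus> y' \<otimes> v" by (simp only: t(2))
              also have "\<dots> = y' \<otimes> (d \<otimes> t \<oplus> v)" using t(1) y'(1) v(1) cd(2) by algebra
              finally show ?thesis unfolding pmul_def using t v cd by auto
            qed
          qed
        qed
        then show ?thesis using y' by auto
      next
        assume "\<exists>w\<in>carrier R. q = c \<otimes> w"
        then obtain w where w: "w \<in> carrier R" "q = c \<otimes> w" by auto
        have "r = (d \<otimes> c) \<otimes> w" using q w cd by (simp add: m_assoc)
        then have r0: "r = \<zero>" using dc0 w by simp
        have "pmul R \<one> = carrier R" unfolding pmul_def by (auto, metis l_one)
        moreover have "annR R r = carrier R" unfolding annR_def using r0 by auto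
        ultimately have "annR R r = pmul R \<one>" by simp
        then show ?thesis by auto
      qed
    qed
  qed
qed


end

lemma ideal_module_simps [simp]:
  "carrier (ideal_module R I) = I" "add (ideal_module R I) = add R"
  "zero (ideal_module R I) = zero R" "smult (ideal_module R I) = mult R"
  by (simp_all add: ideal_module_def)

lemma (in ring) ideal_module_abelian:
  assumes "ideal I R"
  shows "abelian_monoid (ideal_module R I)"
proof -
  interpret ideal I R by fact
  show ?thesis
  proof (rule abelian_monoidI)
    fix x y z assume "x \<in> carrier (ideal_module R I)" "y \<in> carrier (ideal_module R I)" "z \<in> carrier (ideal_module R I)"
    then have "x \<in> carrier R" "y \<in> carrier R" "z \<in> carrier R" using a_subset by auto
    then show "x \<oplus>\<^bsub>ideal_module R I\<^esub> y \<oplus>\<^bsub>ideal_module R I\<^esub> z = x \<oplus>\<^bsub>ideal_module R I\<^esub> (y \<oplus>\<^bsub>ideal_module R I\<^esub> z)"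
      by (simp add: a_assoc)
  next
    fix x y assume "x \<in> carrier (ideal_module R I)" "y \<in> carrier (ideal_module R I)"
    then have "x \<in> carrier R" "y \<in> carrier R" using a_subset by auto
    then show "x \<oplus>\<^bsub>ideal_module R I\<^esub> y = y \<oplus>\<^bsub>ideal_module R I\<^esub> x"
      by (simp add: a_comm)
  next
    fix x assume "x \<in> carrier (ideal_module R I)"
    then have "x \<in> carrier R" using a_subset by auto
    then show "\<zero>\<^bsub>ideal_module R I\<^esub> \<oplus>\<^bsub>ideal_module R I\<^esub> x = x" by simp
  qed (auto simp: a_closed)
qed

lemma (in ring) ideal_module_finsum_pmul:
  assumes I: "ideal I R" and fin: "finite A" and f: "f \<in> A \<rightarrow> I"
    and fg: "\<forall>a\<in>A. f a \<in> pmul R g" and g: "g \<in> carrier R"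
  shows "finsum (ideal_module R I) f A \<in> pmul R g"
  using fin f fg
proof (induction A rule: finite_induct)
  interpret M: abelian_monoid "ideal_module R I" using ideal_module_abelian[OF I] .
  case empty
  have "finsum (ideal_module R I) f {} = \<zero>" using M.finsum_empty by simp
  then show ?case unfolding pmul_def using g by (auto intro!: exI[of _ \<zero>])
next
  interpret M: abelian_monoid "ideal_module R I" using ideal_module_abelian[OF I] .
  case (insert a A)
  have "finsum (ideal_module R I) f (insert a A) = f a \<oplus> finsum (ideal_module R I) f A"
    using M.finsum_insert[of A a f] insert by auto
  moreover have "finsum (ideal_module R I) f A \<in> pmul R g" using insert by auto
  then obtain v where v: "v \<in> carrier R" "finsum (ideal_module R I) f A = g \<otimes> v" unfolding pmul_def by auto
  moreover have "f a \<in> pmul R g" using insert by auto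
  then obtain u where u: "u \<in> carrier R" "f a = g \<otimes> u" unfolding pmul_def by auto
  ultimately have "finsum (ideal_module R I) f (insert a A) = g \<otimes> (u \<oplus> v)" using g by (simp add: r_distr)
  then show ?case unfolding pmul_def using u v by auto
qed

lemma (in ring) lincomb1:
  assumes I: "ideal I R" and r: "r \<in> I" and x: "x 0 \<in> carrier R"
  shows "lincomb (ideal_module R I) 1 (\<lambda>_. r) x = x 0 \<otimes> r"
proof -
  interpret M: abelian_monoid "ideal_module R I" using ideal_module_abelian[OF I] .
  have xr: "x 0 \<otimes> r \<in> I" using ideal.I_l_closed[OF I r x] .
  have "lincomb (ideal_module R I) 1 (\<lambda>_. r) x = finsum (ideal_module R I) (\<lambda>j. x j \<otimes> r) {0}"
    unfolding lincomb_def by (simp add: lessThan_Suc)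
  also have "\<dots> = x 0 \<otimes> r \<oplus>\<^bsub>ideal_module R I\<^esub> finsum (ideal_module R I) (\<lambda>j. x j \<otimes> r) {}"
    using M.finsum_insert[of "{}" 0 "\<lambda>j. x j \<otimes> r"] xr by simp
  also have "\<dots> = x 0 \<otimes> r" using M.finsum_empty xr additive_subgroup.a_subset[OF ideal.axioms(1)[OF I]] by (simp add: subsetD)
  finally show ?thesis .
qed

context chain_cring
begin

lemma coherent_if_ann:
  assumes cd: "c \<in> carrier R" "d \<in> carrier R" "c \<noteq> \<zero>" "d \<noteq> \<zero>"
    and ad: "annR R d = pmul R c"
  shows "coherent_ring R"
  unfolding coherent_ring_def
proof (intro allI impI)
  fix I assume I: "ideal I R" and l0: "lambda_ge R (ideal_module R I) 0"
  interpret I: ideal I R by fact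
  obtain k :: "nat \<Rightarrow> nat" and g where
    g: "\<forall>j<k 0. g j \<in> I" and
    surj: "\<forall>y\<in>I. \<exists>x\<in>fvec R (k 0). y = lincomb (ideal_module R I) (k 0) g x"
    using l0 unfolding lambda_ge_def by (auto simp: ideal_module_def)
  have Gsub: "g ` {..<k 0} \<subseteq> carrier R" using g I.a_subset by auto
  obtain r where r: "r \<in> insert \<zero> (g ` {..<k 0})" "\<forall>h\<in>g ` {..<k 0}. \<exists>c\<in>carrier R. h = r \<otimes> c"
    using finite_divisor[OF _ Gsub] by blast
  have rI: "r \<in> I" using r(1) g I.zero_closed by auto
  have rc: "r \<in> carrier R" using rI I.a_subset by auto
  have IP: "I = pmul R r"
  proof
    show "pmul R r \<subseteq> I" unfolding pmul_def using rI I.I_r_closed by auto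
    show "I \<subseteq> pmul R r"
    proof
      fix y assume y: "y \<in> I"
      then obtain x where x: "x \<in> fvec R (k 0)" "y = lincomb (ideal_module R I) (k 0) g x"
        using surj by auto
      have "finsum (ideal_module R I) (\<lambda>j. x j \<otimes> g j) {..<k 0} \<in> pmul R r"
      proof (rule ideal_module_finsum_pmul[OF I _ _ _ rc])
        show "(\<lambda>j. x j \<otimes> g j) \<in> {..<k 0} \<rightarrow> I"
          using x(1) g I.I_l_closed unfolding fvec_def by auto
        show "\<forall>a\<in>{..<k 0}. x a \<otimes> g a \<in> pmul R r"
        proof
          fix a assume a: "a \<in> {..<k 0}"
          then obtain c where c: "c \<in> carrier R" "g a = r \<otimes> c" using r(2) by auto
          have xa: "x a \<in> carrier R" using x(1) a unfolding fvec_def by auto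
          have "x a \<otimes> g a = r \<otimes> (x a \<otimes> c)" using c xa rc by (simp add: m_lcomm)
          then show "x a \<otimes> g a \<in> pmul R r" unfolding pmul_def using xa c by auto
        qed
      qed auto
      then show "y \<in> pmul R r" using x(2) unfolding lincomb_def by (simp add: ideal_module_def)
    qed
  qed
  obtain a where a: "a \<in> carrier R" "annR R r = pmul R a"
    using ann_all_principal[OF cd ad rc] by auto
  show "lambda_ge R (ideal_module R I) 1"
    unfolding lambda_ge_def
  proof (intro exI[of _ "\<lambda>_. 1"] exI[of _ "\<lambda>_ _ _. a"] exI[of _ "\<lambda>_. r"] conjI)
    show "\<forall>j<1. r \<in> carrier (ideal_module R I)" using rI by (simp add: ideal_module_def)
    show "\<forall>i\<in>{1..1}. \<forall>ra<1. \<forall>c<1. a \<in> carrier R" using a by auto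
    show "\<forall>y\<in>carrier (ideal_module R I). \<exists>x\<in>fvec R 1. y = lincomb (ideal_module R I) 1 (\<lambda>_. r) x"
    proof
      fix y assume "y \<in> carrier (ideal_module R I)"
      then have "y \<in> pmul R r" using IP by (simp add: ideal_module_def)
      then obtain v where v: "v \<in> carrier R" "y = r \<otimes> v" unfolding pmul_def by auto
      let ?x = "\<lambda>j::nat. if j = 0 then v else \<zero>"
      have "?x \<in> fvec R 1" unfolding fvec_def using v by auto
      moreover have "y = lincomb (ideal_module R I) 1 (\<lambda>_. r) ?x"
        using lincomb1[OF I rI, of ?x] v rc by (simp add: m_comm)
      ultimately show "\<exists>x\<in>fvec R 1. y = lincomb (ideal_module R I) 1 (\<lambda>_. r) x" by blast
    qed
    show "1 \<le> (1::nat) \<longrightarrow> (\<forall>x\<in>fvec R 1. (lincomb (ideal_module R I) 1 (\<lambda>_. r) x = \<zero>\<^bsub>ideal_module R I\<^esub>) =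
        (\<exists>z\<in>fvec R 1. x = matvec R (\<lambda>_ _. a) 1 1 z))"
    proof (intro impI ballI)
      fix x assume x: "x \<in> fvec R 1"
      have x0: "x 0 \<in> carrier R" and xj: "\<And>j. j \<ge> 1 \<Longrightarrow> x j = \<zero>" using x unfolding fvec_def by auto
      have mv: "\<And>z. z 0 \<in> carrier R \<Longrightarrow> matvec R (\<lambda>_ _. a) 1 1 z = (\<lambda>i. if i = 0 then a \<otimes> z 0 else \<zero>)"
        unfolding matvec_def using a by (auto simp: lessThan_Suc)
      have "(lincomb (ideal_module R I) 1 (\<lambda>_. r) x = \<zero>\<^bsub>ideal_module R I\<^esub>) \<longleftrightarrow> x 0 \<in> annR R r"
        using lincomb1[OF I rI, of x] x0 rc by (simp add: ideal_module_def annR_def m_comm)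
      also have "\<dots> \<longleftrightarrow> (\<exists>v\<in>carrier R. x 0 = a \<otimes> v)" using a unfolding pmul_def by auto
      also have "\<dots> \<longleftrightarrow> (\<exists>z\<in>fvec R 1. x = matvec R (\<lambda>_ _. a) 1 1 z)"
      proof
        assume "\<exists>v\<in>carrier R. x 0 = a \<otimes> v"
        then obtain v where v: "v \<in> carrier R" "x 0 = a \<otimes> v" by auto
        let ?z = "\<lambda>j::nat. if j = 0 then v else \<zero>"
        have "?z \<in> fvec R 1" unfolding fvec_def using v by auto
        moreover have "x = matvec R (\<lambda>_ _. a) 1 1 ?z"
          using mv[of ?z] v xj by (auto simp: fun_eq_iff)
        ultimately show "\<exists>z\<in>fvec R 1. x = matvec R (\<lambda>_ _. a) 1 1 z" by blast
      next
        assume "\<exists>z\<in>fvec R 1. x = matvec R (\<lambda>_ _. a) 1 1 z"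
        then obtain z where z: "z \<in> fvec R 1" "x = matvec R (\<lambda>_ _. a) 1 1 z" by auto
        have "z 0 \<in> carrier R" using z unfolding fvec_def by auto
        then show "\<exists>v\<in>carrier R. x 0 = a \<otimes> v" using mv z by auto
      qed
      finally show "(lincomb (ideal_module R I) 1 (\<lambda>_. r) x = \<zero>\<^bsub>ideal_module R I\<^esub>) =
        (\<exists>z\<in>fvec R 1. x = matvec R (\<lambda>_ _. a) 1 1 z)" .
    qed
  qed auto
qed

lemma pstar_noncoherent:
  assumes nc: "\<not> coherent_ring R"
    and p: "p \<in> carrier R" "p \<noteq> \<zero>"
    and fg: "finite G" "G \<subseteq> annR R p" "annR R p \<subseteq> sspan R G"
    and y: "y \<in> carrier R" "p \<otimes> y = \<zero>"
  shows "y = \<zero>"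
proof (rule ccontr)
  assume yn: "y \<noteq> \<zero>"
  have Gc: "G \<subseteq> carrier R" using fg annR_sub by auto
  obtain g where g: "g \<in> insert \<zero> G" "sspan R G \<subseteq> pmul R g"
    using sspan_principal[OF fg(1) Gc] by auto
  have gc: "g \<in> carrier R" using g Gc by auto
  have "g \<in> annR R p" using g(1) fg p unfolding annR_def by auto
  then have pg: "p \<otimes> g = \<zero>" unfolding annR_def by auto
  have eq: "annR R p = pmul R g"
  proof
    show "annR R p \<subseteq> pmul R g" using fg g by auto
    show "pmul R g \<subseteq> annR R p"
    proof
      fix z assume "z \<in> pmul R g"
      then obtain v where v: "v \<in> carrier R" "z = g \<otimes> v" unfolding pmul_def by auto
      have "p \<otimes> z = (p \<otimes> g) \<otimes> v" using v p gc by (simp add: m_assoc)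
      then show "z \<in> annR R p" using pg v gc unfolding annR_def by simp
    qed
  qed
  have "g \<noteq> \<zero>"
  proof
    assume "g = \<zero>"
    then have "y \<in> pmul R \<zero>" using eq y unfolding annR_def by auto
    then show False using yn unfolding pmul_def by auto
  qed
  then have "coherent_ring R" using coherent_if_ann[OF gc p(1) _ p(2) eq] by simp
  then show False using nc by simp
qed

end

definition vecs :: "('a, 'm) ring_scheme \<Rightarrow> nat set \<Rightarrow> (nat \<Rightarrow> 'a) set" where
  "vecs R J = {x. (\<forall>j\<in>J. x j \<in> carrier R) \<and> (\<forall>j. j \<notin> J \<longrightarrow> x j = \<zero>\<^bsub>R\<^esub>)}"

definition vzero :: "('a, 'm) ring_scheme \<Rightarrow> nat \<Rightarrow> 'a" where
  "vzero R = (\<lambda>_. \<zero>\<^bsub>R\<^esub>)"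

definition vadd :: "('a, 'm) ring_scheme \<Rightarrow> (nat \<Rightarrow> 'a) \<Rightarrow> (nat \<Rightarrow> 'a) \<Rightarrow> nat \<Rightarrow> 'a" where
  "vadd R x y = (\<lambda>j. x j \<oplus>\<^bsub>R\<^esub> y j)"

definition vsm :: "('a, 'm) ring_scheme \<Rightarrow> 'a \<Rightarrow> (nat \<Rightarrow> 'a) \<Rightarrow> nat \<Rightarrow> 'a" where
  "vsm R c x = (\<lambda>j. c \<otimes>\<^bsub>R\<^esub> x j)"

abbreviation vspan :: "('a, 'm) ring_scheme \<Rightarrow> (nat \<Rightarrow> 'a) set \<Rightarrow> (nat \<Rightarrow> 'a) set" where
  "vspan R G \<equiv> gspan (carrier R) (vzero R) (vadd R) (vsm R) G"

definition gmv :: "('a, 'm) ring_scheme \<Rightarrow> (nat \<Rightarrow> nat \<Rightarrow> 'a) \<Rightarrow> nat \<Rightarrow> nat set \<Rightarrow> (nat \<Rightarrow> 'a) \<Rightarrow> nat \<Rightarrow> 'a" where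
  "gmv R a m J x = (\<lambda>i. if i < m then (\<Oplus>\<^bsub>R\<^esub> l \<in> J. a l i \<otimes>\<^bsub>R\<^esub> x l) else \<zero>\<^bsub>R\<^esub>)"

definition linmap :: "('a, 'm) ring_scheme \<Rightarrow> nat set \<Rightarrow> ((nat \<Rightarrow> 'a) \<Rightarrow> (nat \<Rightarrow> 'a)) \<Rightarrow> bool" where
  "linmap R J s \<longleftrightarrow> (\<forall>x\<in>vecs R J. s x \<in> vecs R J) \<and>
     (\<forall>x\<in>vecs R J. \<forall>y\<in>vecs R J. s (vadd R x y) = vadd R (s x) (s y)) \<and>
     (\<forall>c\<in>carrier R. \<forall>x\<in>vecs R J. s (vsm R c x) = vsm R c (s x))"

definition umap :: "('a, 'm) ring_scheme \<Rightarrow> nat \<Rightarrow> nat set \<Rightarrow> (nat \<Rightarrow> 'a) \<Rightarrow> 'a \<Rightarrow> (nat \<Rightarrow> 'a) \<Rightarrow> nat \<Rightarrow> 'a" where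
  "umap R j J' c s x = x(j := x j \<oplus>\<^bsub>R\<^esub> s \<otimes>\<^bsub>R\<^esub> (\<Oplus>\<^bsub>R\<^esub> l \<in> J'. c l \<otimes>\<^bsub>R\<^esub> x l))"

context cring
begin

lemma vecs_vzero [simp]: "vzero R \<in> vecs R J"
  unfolding vecs_def vzero_def by auto

lemma vecs_vadd [simp]: "x \<in> vecs R J \<Longrightarrow> y \<in> vecs R J \<Longrightarrow> vadd R x y \<in> vecs R J"
  unfolding vecs_def vadd_def by auto

lemma vecs_vsm [simp]: "c \<in> carrier R \<Longrightarrow> x \<in> vecs R J \<Longrightarrow> vsm R c x \<in> vecs R J"
  unfolding vecs_def vsm_def by auto

lemma vecs_carrier: "x \<in> vecs R J \<Longrightarrow> x l \<in> carrier R"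
  unfolding vecs_def by (cases "l \<in> J") auto

lemma vecs_out: "x \<in> vecs R J \<Longrightarrow> l \<notin> J \<Longrightarrow> x l = \<zero>"
  unfolding vecs_def by auto

lemma vspan_vecs: "G \<subseteq> vecs R J \<Longrightarrow> vspan R G \<subseteq> vecs R J"
  by (rule gspan_sub) auto

lemma finsum_minus:
  assumes "finite A" "f \<in> A \<rightarrow> carrier R" "g \<in> A \<rightarrow> carrier R"
  shows "(\<Oplus>l\<in>A. f l \<ominus> g l) = (\<Oplus>l\<in>A. f l) \<ominus> (\<Oplus>l\<in>A. g l)"
  using assms
proof (induction A rule: finite_induct)
  case empty then show ?case by simp algebra
next
  case (insert a A)
  have fa: "f a \<in> carrier R" "g a \<in> carrier R" using insert by auto
  have c: "f \<in> A \<rightarrow> carrier R" "g \<in> A \<rightarrow> carrier R" using insert by auto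
  have s: "(\<Oplus>l\<in>A. f l) \<in> carrier R" "(\<Oplus>l\<in>A. g l) \<in> carrier R" using c by auto
  have "(\<Oplus>l\<in>insert a A. f l \<ominus> g l) = (f a \<ominus> g a) \<oplus> (\<Oplus>l\<in>A. f l \<ominus> g l)"
    using insert c fa by (simp add: Pi_def)
  also have "\<dots> = (f a \<ominus> g a) \<oplus> ((\<Oplus>l\<in>A. f l) \<ominus> (\<Oplus>l\<in>A. g l))" using insert c by simp
  also have "\<dots> = (f a \<oplus> (\<Oplus>l\<in>A. f l)) \<ominus> (g a \<oplus> (\<Oplus>l\<in>A. g l))" using fa s by algebra
  also have "\<dots> = (\<Oplus>l\<in>insert a A. f l) \<ominus> (\<Oplus>l\<in>insert a A. g l)" using insert c fa by simp
  finally show ?case .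
qed

lemma gmv_cong:
  assumes "\<forall>l\<in>J. \<forall>i<m. a l i \<in> carrier R" "\<forall>l\<in>J. y l \<in> carrier R" "\<And>l. l \<in> J \<Longrightarrow> x l = y l"
  shows "gmv R a m J x = gmv R a m J y"
  unfolding gmv_def
proof (rule ext)
  fix i
  show "(if i < m then \<Oplus>l\<in>J. a l i \<otimes> x l else \<zero>) = (if i < m then \<Oplus>l\<in>J. a l i \<otimes> y l else \<zero>)"
  proof (cases "i < m")
    case True
    then have "(\<Oplus>l\<in>J. a l i \<otimes> x l) = (\<Oplus>l\<in>J. a l i \<otimes> y l)"
      using assms by (intro finsum_cong') auto
    then show ?thesis by simp
  qed simp
qed

lemma gmv_vecs:
  assumes "finite J" "\<forall>l\<in>J. \<forall>i<m. a l i \<in> carrier R" "x \<in> vecs R J'"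
  shows "gmv R a m J x \<in> vecs R {..<m}"
  unfolding vecs_def gmv_def using assms by (auto intro!: finsum_closed simp: vecs_carrier)

lemma sum_J_closed:
  assumes "c \<in> J' \<rightarrow> carrier R" "x \<in> vecs R J"
  shows "(\<Oplus>l\<in>J'. c l \<otimes> x l) \<in> carrier R"
  using assms by (auto intro!: finsum_closed simp: vecs_carrier)

lemma alg_inv: "a \<in> carrier R \<Longrightarrow> b \<in> carrier R \<Longrightarrow> s \<in> carrier R \<Longrightarrow>
   (a \<oplus> s \<otimes> b) \<oplus> (\<ominus> s) \<otimes> b = a"
  by algebra

lemma alg_add: "a \<in> carrier R \<Longrightarrow> b \<in> carrier R \<Longrightarrow> s \<in> carrier R \<Longrightarrow> u \<in> carrier R \<Longrightarrow> v \<in> carrier R \<Longrightarrow>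
   (a \<oplus> b) \<oplus> s \<otimes> (u \<oplus> v) = (a \<oplus> s \<otimes> u) \<oplus> (b \<oplus> s \<otimes> v)"
  by algebra

lemma alg_sm: "a \<in> carrier R \<Longrightarrow> k \<in> carrier R \<Longrightarrow> s \<in> carrier R \<Longrightarrow> u \<in> carrier R \<Longrightarrow>
   k \<otimes> a \<oplus> s \<otimes> (k \<otimes> u) = k \<otimes> (a \<oplus> s \<otimes> u)"
  by algebra

lemma umap_vecs:
  assumes "j \<in> J" "c \<in> J' \<rightarrow> carrier R" "s \<in> carrier R" "x \<in> vecs R J"
  shows "umap R j J' c s x \<in> vecs R J"
  using assms sum_J_closed[OF assms(2,4)] unfolding umap_def vecs_def by auto

lemma umap_add:
  assumes "finite J'" "c \<in> J' \<rightarrow> carrier R" "s \<in> carrier R" "x \<in> vecs R J" "y \<in> vecs R J"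
  shows "umap R j J' c s (vadd R x y) = vadd R (umap R j J' c s x) (umap R j J' c s y)"
proof -
  have "(\<Oplus>l\<in>J'. c l \<otimes> (x l \<oplus> y l)) = (\<Oplus>l\<in>J'. c l \<otimes> x l \<oplus> c l \<otimes> y l)"
    by (rule finsum_cong') (use assms in \<open>auto simp: r_distr vecs_carrier Pi_def\<close>)
  also have "\<dots> = (\<Oplus>l\<in>J'. c l \<otimes> x l) \<oplus> (\<Oplus>l\<in>J'. c l \<otimes> y l)"
    by (rule finsum_addf) (use assms in \<open>auto simp: vecs_carrier\<close>)
  finally have e: "(\<Oplus>l\<in>J'. c l \<otimes> (x l \<oplus> y l)) = (\<Oplus>l\<in>J'. c l \<otimes> x l) \<oplus> (\<Oplus>l\<in>J'. c l \<otimes> y l)" .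
  have cl: "(\<Oplus>l\<in>J'. c l \<otimes> x l) \<in> carrier R" "(\<Oplus>l\<in>J'. c l \<otimes> y l) \<in> carrier R"
    using sum_J_closed assms by auto
  have xj: "x j \<in> carrier R" "y j \<in> carrier R" using assms vecs_carrier by auto
  show ?thesis unfolding umap_def vadd_def
    using e alg_add[OF xj assms(3) cl] by (auto simp: fun_eq_iff)
qed

lemma umap_sm:
  assumes "finite J'" "c \<in> J' \<rightarrow> carrier R" "s \<in> carrier R" "x \<in> vecs R J" "k \<in> carrier R"
  shows "umap R j J' c s (vsm R k x) = vsm R k (umap R j J' c s x)"
proof -
  have "(\<Oplus>l\<in>J'. c l \<otimes> (k \<otimes> x l)) = (\<Oplus>l\<in>J'. k \<otimes> (c l \<otimes> x l))"
    by (rule finsum_cong') (use assms in \<open>auto simp: m_lcomm vecs_carrier Pi_def\<close>)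
  also have "\<dots> = k \<otimes> (\<Oplus>l\<in>J'. c l \<otimes> x l)"
    by (rule finsum_rdistr[symmetric]) (use assms in \<open>auto simp: vecs_carrier\<close>)
  finally have e: "(\<Oplus>l\<in>J'. c l \<otimes> (k \<otimes> x l)) = k \<otimes> (\<Oplus>l\<in>J'. c l \<otimes> x l)" .
  have cl: "(\<Oplus>l\<in>J'. c l \<otimes> x l) \<in> carrier R" using sum_J_closed assms by auto
  have xj: "x j \<in> carrier R" using assms vecs_carrier by auto
  show ?thesis unfolding umap_def vsm_def
    using e alg_sm[OF xj assms(5,3) cl] by (auto simp: fun_eq_iff)
qed

lemma umap_inv:
  assumes "j \<notin> J'" "c \<in> J' \<rightarrow> carrier R" "s \<in> carrier R" "x \<in> vecs R J"
  shows "umap R j J' c (\<ominus> s) (umap R j J' c s x) = x"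
proof -
  have e: "(\<Oplus>l\<in>J'. c l \<otimes> umap R j J' c s x l) = (\<Oplus>l\<in>J'. c l \<otimes> x l)"
    using assms(1,2,4) unfolding umap_def by (intro finsum_cong') (auto simp: Pi_def vecs_carrier)
  have cl: "(\<Oplus>l\<in>J'. c l \<otimes> x l) \<in> carrier R" using sum_J_closed assms by auto
  have xj: "x j \<in> carrier R" using assms vecs_carrier by auto
  show ?thesis
  proof (rule ext)
    fix l show "umap R j J' c (\<ominus> s) (umap R j J' c s x) l = x l"
    proof (cases "l = j")
      case True
      have "umap R j J' c (\<ominus> s) (umap R j J' c s x) l =
          (x j \<oplus> s \<otimes> (\<Oplus>l\<in>J'. c l \<otimes> x l)) \<oplus> (\<ominus> s) \<otimes> (\<Oplus>l\<in>J'. c l \<otimes> x l)"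
        using True e unfolding umap_def[of R j J' c "\<ominus> s"] by (simp add: umap_def)
      also have "\<dots> = x j" using alg_inv[OF xj cl assms(3)] .
      finally show ?thesis using True by simp
    qed (simp add: umap_def)
  qed
qed

lemma umap_zero:
  assumes "finite J'" "c \<in> J' \<rightarrow> carrier R" "s \<in> carrier R"
  shows "umap R j J' c s (vzero R) = vzero R"
proof -
  have "(\<Oplus>l\<in>J'. c l \<otimes> \<zero>) = (\<Oplus>l\<in>J'. \<zero>)"
    by (rule finsum_cong') (use assms in \<open>auto simp: Pi_def\<close>)
  then show ?thesis unfolding umap_def vzero_def using assms by (auto simp: fun_eq_iff)
qed

lemma linmap_umap:
  assumes "finite J'" "j \<in> J" "c \<in> J' \<rightarrow> carrier R" "s \<in> carrier R"
  shows "linmap R J (umap R j J' c s)"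
  unfolding linmap_def using assms umap_vecs umap_add umap_sm by auto

lemma linmap_comp:
  assumes "linmap R J f" "linmap R J g"
  shows "linmap R J (f \<circ> g)"
  using assms unfolding linmap_def by auto

lemma linmap_zero:
  assumes "linmap R J f" shows "f (vzero R) = vzero R"
proof -
  have "f (vsm R \<zero> (vzero R)) = vsm R \<zero> (f (vzero R))" using assms unfolding linmap_def by auto
  moreover have "vsm R \<zero> (vzero R) = vzero R" unfolding vsm_def vzero_def by auto
  moreover have "vsm R \<zero> (f (vzero R)) = vzero R"
  proof -
    have "f (vzero R) \<in> vecs R J" using assms unfolding linmap_def by auto
    then show ?thesis unfolding vsm_def vzero_def by (auto simp: fun_eq_iff vecs_carrier)
  qed
  ultimately show ?thesis by simp
qed


lemma alg_KI1: "a \<in> carrier R \<Longrightarrow> c \<in> carrier R \<Longrightarrow> b \<in> carrier R \<Longrightarrow> x \<in> carrier R \<Longrightarrow>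
   (a \<ominus> c \<otimes> b) \<otimes> x = a \<otimes> x \<ominus> b \<otimes> (c \<otimes> x)"
  by algebra

lemma alg_KI2: "a \<in> carrier R \<Longrightarrow> x \<in> carrier R \<Longrightarrow> S \<in> carrier R \<Longrightarrow> P \<in> carrier R \<Longrightarrow>
   a \<otimes> (x \<oplus> (\<ominus> \<one>) \<otimes> S) \<oplus> P = a \<otimes> x \<oplus> (P \<ominus> a \<otimes> S)"
  by algebra

lemma KI:
  assumes fin: "finite J'" and jn: "j \<notin> J'" and J: "J = insert j J'"
    and a: "\<forall>l\<in>J. \<forall>i<m. a l i \<in> carrier R" and c: "c \<in> J' \<rightarrow> carrier R"
    and x: "x \<in> vecs R J"
  shows "gmv R a m J (umap R j J' c (\<ominus> \<one>) x) =
     vadd R (\<lambda>i. if i < m then a j i \<otimes> x j else \<zero>) (gmv R (\<lambda>l i. a l i \<ominus> c l \<otimes> a j i) m J' x)"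
proof (rule ext)
  fix i
  show "gmv R a m J (umap R j J' c (\<ominus> \<one>) x) i =
     vadd R (\<lambda>i. if i < m then a j i \<otimes> x j else \<zero>) (gmv R (\<lambda>l i. a l i \<ominus> c l \<otimes> a j i) m J' x) i"
  proof (cases "i < m")
    case False
    then show ?thesis unfolding gmv_def vadd_def by simp
  next
    case True
    let ?S = "\<Oplus>l\<in>J'. c l \<otimes> x l"
    let ?P = "\<Oplus>l\<in>J'. a l i \<otimes> x l"
    have xc: "\<And>l. x l \<in> carrier R" using x vecs_carrier by auto
    have ac: "\<And>l. l \<in> J \<Longrightarrow> a l i \<in> carrier R" using a True by auto
    have Sc: "?S \<in> carrier R" using sum_J_closed[OF c x] .
    have Pc: "?P \<in> carrier R" using ac xc J by (auto intro!: finsum_closed)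
    have ajc: "a j i \<in> carrier R" using ac J by auto
    have u: "umap R j J' c (\<ominus> \<one>) x \<in> vecs R J" using umap_vecs[OF _ c _ x, of j] J by simp
    have "(\<Oplus>l\<in>J. a l i \<otimes> umap R j J' c (\<ominus> \<one>) x l) =
        a j i \<otimes> umap R j J' c (\<ominus> \<one>) x j \<oplus> (\<Oplus>l\<in>J'. a l i \<otimes> umap R j J' c (\<ominus> \<one>) x l)"
      unfolding J using finsum_insert[OF fin jn, of "\<lambda>l. a l i \<otimes> umap R j J' c (\<ominus> \<one>) x l"] ac J u
      by (simp add: Pi_def vecs_carrier)
    then have "(\<Oplus>l\<in>J. a l i \<otimes> umap R j J' c (\<ominus> \<one>) x l) =
        a j i \<otimes> (x j \<oplus> (\<ominus> \<one>) \<otimes> ?S) \<oplus> (\<Oplus>l\<in>J'. a l i \<otimes> umap R j J' c (\<ominus> \<one>) x l)"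
      by (simp add: umap_def)
    also have "(\<Oplus>l\<in>J'. a l i \<otimes> umap R j J' c (\<ominus> \<one>) x l) = ?P"
      using jn ac J xc by (intro finsum_cong') (auto simp: umap_def)
    also have "a j i \<otimes> (x j \<oplus> (\<ominus> \<one>) \<otimes> ?S) \<oplus> ?P = a j i \<otimes> x j \<oplus> (?P \<ominus> a j i \<otimes> ?S)"
      using alg_KI2[OF ajc xc Sc Pc] .
    also have "?P \<ominus> a j i \<otimes> ?S = (\<Oplus>l\<in>J'. (a l i \<ominus> c l \<otimes> a j i) \<otimes> x l)"
    proof -
      have "(\<Oplus>l\<in>J'. (a l i \<ominus> c l \<otimes> a j i) \<otimes> x l) = (\<Oplus>l\<in>J'. a l i \<otimes> x l \<ominus> a j i \<otimes> (c l \<otimes> x l))"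
        using ac J c xc ajc by (intro finsum_cong') (auto simp: Pi_def alg_KI1)
      also have "\<dots> = ?P \<ominus> (\<Oplus>l\<in>J'. a j i \<otimes> (c l \<otimes> x l))"
        using ac J c xc ajc fin by (intro finsum_minus) (auto simp: Pi_def)
      also have "(\<Oplus>l\<in>J'. a j i \<otimes> (c l \<otimes> x l)) = a j i \<otimes> ?S"
        using c xc ajc fin by (intro finsum_rdistr[symmetric]) (auto simp: Pi_def)
      finally show ?thesis by simp
    qed
    finally show ?thesis unfolding gmv_def vadd_def using True by simp
  qed
qed


lemma alg_comm0: "a \<in> carrier R \<Longrightarrow> b \<in> carrier R \<Longrightarrow> a \<otimes> b \<ominus> b \<otimes> a = \<zero>"
  by algebra

lemma gmv_zero_vec:
  assumes "\<forall>l\<in>J. \<forall>i<m. a l i \<in> carrier R" "\<forall>l\<in>J. x l = \<zero>"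
  shows "gmv R a m J x = vzero R"
proof -
  have "\<And>i. i < m \<Longrightarrow> (\<Oplus>l\<in>J. a l i \<otimes> x l) = (\<Oplus>l\<in>J. \<zero>)"
    using assms by (intro finsum_cong') auto
  then show ?thesis unfolding gmv_def vzero_def by (auto simp: fun_eq_iff)
qed

lemma gmv_allzero:
  assumes "\<forall>l\<in>J. \<forall>i<m. a l i = \<zero>" "x \<in> vecs R J'"
  shows "gmv R a m J x = vzero R"
proof -
  have "\<And>i. i < m \<Longrightarrow> (\<Oplus>l\<in>J. a l i \<otimes> x l) = (\<Oplus>l\<in>J. \<zero>)"
    using assms by (intro finsum_cong') (auto simp: vecs_carrier)
  then show ?thesis unfolding gmv_def vzero_def by (auto simp: fun_eq_iff)
qed

lemma vadd_zero_pad: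
  assumes "v \<in> vecs R J" "\<forall>i<m. a i \<in> carrier R"
  shows "vadd R (\<lambda>i. if i < m then a i \<otimes> \<zero> else \<zero>) v = v"
  unfolding vadd_def using assms by (auto simp: fun_eq_iff vecs_carrier)

lemma linmap_vzero_map: "linmap R J (\<lambda>x. vzero R)"
  unfolding linmap_def vadd_def vsm_def vzero_def vecs_def by auto

lemma upd_zero_vecs:
  assumes "x \<in> vecs R J" "J' = J - {j}"
  shows "x(j := \<zero>) \<in> vecs R J'"
  using assms unfolding vecs_def by auto

end

locale pstar_ring = chain_cring +
  assumes pstar: "\<lbrakk>p \<in> carrier R; p \<noteq> \<zero>; finite G; G \<subseteq> annR R p; annR R p \<subseteq> sspan R G;
     y \<in> carrier R; p \<otimes> y = \<zero>\<rbrakk> \<Longrightarrow> y = \<zero>"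
begin

lemma local_split:
  assumes "finite J" "\<forall>l\<in>J. \<forall>i<m. a l i \<in> carrier R" "finite G" "G \<subseteq> K" "K \<subseteq> vspan R G"
    "K = {x \<in> vecs R J. gmv R a m J x = vzero R}"
  shows "\<exists>\<sigma>. linmap R J \<sigma> \<and> (\<forall>x\<in>vecs R J. gmv R a m J (\<sigma> x) = gmv R a m J x) \<and> (\<forall>x\<in>K. \<sigma> x = vzero R)"
  using assms
proof (induction "card J" arbitrary: J a G K rule: less_induct)
  case less
  note finJ = less.prems(1) and ac = less.prems(2) and finG = less.prems(3)
    and GK = less.prems(4) and Kspan = less.prems(5) and Kdef = less.prems(6)
  let ?f = "gmv R a m J"
  show ?case
  proof (cases "\<forall>l\<in>J. \<forall>i<m. a l i = \<zero>")
    case True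
    have "\<forall>x\<in>vecs R J. ?f x = vzero R" using gmv_allzero[OF True] by blast
    then show ?thesis using linmap_vzero_map[of J] gmv_allzero[OF True vecs_vzero] by auto
  next
    case False
    define E where "E = (\<lambda>(l, i). a l i) ` (J \<times> {..<m})"
    have finE: "finite E" unfolding E_def using finJ by auto
    have Ec: "E \<subseteq> carrier R" unfolding E_def using ac by auto
    obtain g where g: "g \<in> insert \<zero> E" "\<forall>h\<in>E. \<exists>c\<in>carrier R. h = g \<otimes> c"
      using finite_divisor[OF finE Ec] by blast
    have gnz: "g \<noteq> \<zero>"
    proof
      assume g0: "g = \<zero>"
      have "\<forall>l\<in>J. \<forall>i<m. a l i = \<zero>"
      proof (intro ballI allI impI)
        fix l i assume "l \<in> J" "i < m"
        then have "a l i \<in> E" unfolding E_def by auto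
        then obtain c where "c \<in> carrier R" "a l i = g \<otimes> c" using g by auto
        then show "a l i = \<zero>" using g0 by simp
      qed
      then show False using False by simp
    qed
    then obtain j i where ji: "j \<in> J" "i < m" "g = a j i" using g(1) unfolding E_def by auto
    define p where "p = a j i"
    have pc: "p \<in> carrier R" using ac ji unfolding p_def by auto
    have pnz: "p \<noteq> \<zero>" using gnz ji unfolding p_def by simp
    have divs: "\<And>l i'. l \<in> J \<Longrightarrow> i' < m \<Longrightarrow> \<exists>c. c \<in> carrier R \<and> a l i' = p \<otimes> c"
    proof -
      fix l i' assume "l \<in> J" "i' < m"
      then have "a l i' \<in> E" unfolding E_def by auto
      then show "\<exists>c. c \<in> carrier R \<and> a l i' = p \<otimes> c" using g ji unfolding p_def by auto
    qed
    define c where "c = (\<lambda>l. SOME c. c \<in> carrier R \<and> a l i = p \<otimes> c)"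
    have cprop: "\<And>l. l \<in> J \<Longrightarrow> c l \<in> carrier R \<and> a l i = p \<otimes> c l"
      unfolding c_def using divs[OF _ ji(2)] by (rule someI_ex) 
    define b where "b = (\<lambda>i'. SOME c. c \<in> carrier R \<and> a j i' = p \<otimes> c)"
    have bprop: "\<And>i'. i' < m \<Longrightarrow> b i' \<in> carrier R \<and> a j i' = p \<otimes> b i'"
      unfolding b_def using divs[OF ji(1)] by (rule someI_ex)
    define J' where "J' = J - {j}"
    have finJ': "finite J'" and jn: "j \<notin> J'" and JJ: "J = insert j J'" and J'sub: "J' \<subseteq> J"
      using finJ ji unfolding J'_def by auto
    have cardJ': "card J' < card J" unfolding J'_def by (rule card_Diff1_less[OF finJ ji(1)])
    have cPi: "c \<in> J' \<rightarrow> carrier R" using cprop J'sub by auto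
    define a' where "a' = (\<lambda>l i'. a l i' \<ominus> c l \<otimes> a j i')"
    have a'c: "\<forall>l\<in>J'. \<forall>i'<m. a' l i' \<in> carrier R"
      unfolding a'_def using ac cprop J'sub ji by auto
    define Q where "Q = umap R j J' c (\<ominus> \<one>)"
    define Qi where "Qi = umap R j J' c \<one>"
    let ?h = "gmv R a' m J'"
    have Qv: "\<And>x. x \<in> vecs R J \<Longrightarrow> Q x \<in> vecs R J" unfolding Q_def using umap_vecs[OF ji(1) cPi] by simp
    have Qiv: "\<And>x. x \<in> vecs R J \<Longrightarrow> Qi x \<in> vecs R J" unfolding Qi_def using umap_vecs[OF ji(1) cPi] by simp
    have QQi: "\<And>x. x \<in> vecs R J \<Longrightarrow> Q (Qi x) = x" unfolding Q_def Qi_def using umap_inv[OF jn cPi] by simp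
    have QiQ: "\<And>x. x \<in> vecs R J \<Longrightarrow> Qi (Q x) = x"
      unfolding Q_def Qi_def using umap_inv[OF jn cPi, of "\<ominus> \<one>"] by simp
    have linQ: "linmap R J Q" unfolding Q_def using linmap_umap[OF finJ' ji(1) cPi] by simp
    have linQi: "linmap R J Qi" unfolding Qi_def using linmap_umap[OF finJ' ji(1) cPi] by simp
    have Qz: "Q (vzero R) = vzero R" using linmap_zero[OF linQ] .
    have Qiz: "Qi (vzero R) = vzero R" using linmap_zero[OF linQi] .
    have KIx: "\<And>x. x \<in> vecs R J \<Longrightarrow> ?f (Q x) = vadd R (\<lambda>i'. if i' < m then a j i' \<otimes> x j else \<zero>) (?h x)"
      unfolding Q_def a'_def using KI[OF finJ' jn JJ ac cPi] by simp
    have hrow: "\<And>x. x \<in> vecs R J \<Longrightarrow> ?h x i = \<zero>"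
    proof -
      fix x assume x: "x \<in> vecs R J"
      have "(\<Oplus>l\<in>J'. a' l i \<otimes> x l) = (\<Oplus>l\<in>J'. \<zero>)"
      proof (rule finsum_cong')
        fix l assume l: "l \<in> J'"
        have "a' l i = p \<otimes> c l \<ominus> c l \<otimes> p" unfolding a'_def p_def using cprop[of l] l J'sub p_def by auto
        also have "\<dots> = \<zero>" using cprop[of l] l J'sub pc alg_comm0 by auto
        finally show "a' l i \<otimes> x l = \<zero>" using x by (simp add: vecs_carrier)
      qed auto
      then show "?h x i = \<zero>" unfolding gmv_def using ji by simp
    qed
    have rowi: "\<And>x. x \<in> vecs R J \<Longrightarrow> ?f (Q x) i = p \<otimes> x j"
    proof -
      fix x assume x: "x \<in> vecs R J"
      have "?f (Q x) i = a j i \<otimes> x j \<oplus> ?h x i" using KIx[OF x] ji unfolding vadd_def by simp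
      then show "?f (Q x) i = p \<otimes> x j" using hrow[OF x] x pc by (simp add: p_def vecs_carrier)
    qed
    have Kv: "K \<subseteq> vecs R J" using Kdef by auto
    have Gv: "G \<subseteq> vecs R J" using GK Kv by auto
    have spanG: "vspan R G \<subseteq> vecs R J" using vspan_vecs[OF Gv] .
    have QiGv: "Qi ` G \<subseteq> vecs R J" using Gv Qiv by auto
    have spanQiG: "vspan R (Qi ` G) \<subseteq> vecs R J" using vspan_vecs[OF QiGv] .
    have Qi_span: "\<And>x. x \<in> vspan R G \<Longrightarrow> Qi x \<in> vspan R (Qi ` G)"
    proof -
      fix x assume x: "x \<in> vspan R G"
      show "Qi x \<in> vspan R (Qi ` G)"
        by (rule gspan_map[where h = Qi and D = "vecs R J"]) (use spanG Qiz x linQi in \<open>auto simp: linmap_def\<close>)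
    qed
    have fQK: "\<And>x. x \<in> vecs R J \<Longrightarrow> ?f (Q x) = vzero R \<Longrightarrow> x \<in> vspan R (Qi ` G)"
    proof -
      fix x assume x: "x \<in> vecs R J" and fx: "?f (Q x) = vzero R"
      have "Q x \<in> K" using Kdef Qv[OF x] fx by auto
      then have "Qi (Q x) \<in> vspan R (Qi ` G)" using Kspan Qi_span by auto
      then show "x \<in> vspan R (Qi ` G)" using QiQ[OF x] by simp
    qed
    have claimA: "\<And>x. x \<in> vecs R J \<Longrightarrow> ?f (Q x) = vzero R \<Longrightarrow> x j = \<zero>"
    proof -
      fix x assume x: "x \<in> vecs R J" and fx: "?f (Q x) = vzero R"
      define G' where "G' = (\<lambda>v. v j) ` Qi ` G"
      have finG': "finite G'" unfolding G'_def using finG by simp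
      have G'ann: "G' \<subseteq> annR R p"
      proof
        fix y assume "y \<in> G'"
        then obtain g where g: "g \<in> G" "y = Qi g j" unfolding G'_def by auto
        have gv: "g \<in> vecs R J" "?f g = vzero R" using g GK Kdef by auto
        have "?f (Q (Qi g)) i = p \<otimes> Qi g j" using rowi[OF Qiv[OF gv(1)]] .
        then have "p \<otimes> y = \<zero>" using QQi[OF gv(1)] gv g unfolding vzero_def by simp
        moreover have "y \<in> carrier R" using g Qiv[OF gv(1)] vecs_carrier by auto
        ultimately show "y \<in> annR R p" unfolding annR_def by auto
      qed
      have annG': "annR R p \<subseteq> sspan R G'"
      proof
        fix y assume y: "y \<in> annR R p"
        then have yc: "y \<in> carrier R" and py: "p \<otimes> y = \<zero>" unfolding annR_def by auto
        define x0 where "x0 = (\<lambda>l. if l = j then y else \<zero>)"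
        have x0v: "x0 \<in> vecs R J" unfolding x0_def vecs_def using yc ji by auto
        have hx0: "?h x0 = vzero R" using gmv_zero_vec[OF a'c] jn unfolding x0_def by auto
        have "?f (Q x0) = vzero R"
        proof -
          have "?f (Q x0) = vadd R (\<lambda>i'. if i' < m then a j i' \<otimes> y else \<zero>) (vzero R)"
            using KIx[OF x0v] hx0 unfolding x0_def by simp
          also have "\<dots> = vzero R"
          proof (rule ext)
            fix i'
            show "vadd R (\<lambda>i'. if i' < m then a j i' \<otimes> y else \<zero>) (vzero R) i' = vzero R i'"
            proof (cases "i' < m")
              case True
              have "a j i' \<otimes> y = b i' \<otimes> (p \<otimes> y)" using bprop[OF True] pc yc by (simp add: m_lcomm m_comm)
              then show ?thesis using True py bprop[OF True] unfolding vadd_def vzero_def by simp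
            qed (simp add: vadd_def vzero_def)
          qed
          finally show ?thesis .
        qed
        then have x0s: "x0 \<in> vspan R (Qi ` G)" using fQK[OF x0v] by simp
        have "(\<lambda>v. v j) x0 \<in> sspan R ((\<lambda>v. v j) ` Qi ` G)"
          by (rule gspan_map[where h = "\<lambda>v. v j" and D = "vecs R J"]) (use spanQiG x0s in \<open>auto simp: vzero_def vadd_def vsm_def\<close>)
        then show "y \<in> sspan R G'" unfolding G'_def x0_def by simp
      qed
      have "p \<otimes> x j = \<zero>" using rowi[OF x] fx unfolding vzero_def by simp
      then show "x j = \<zero>" using pstar[OF pc pnz finG' G'ann annG'] x vecs_carrier by auto
    qed
    define G'' where "G'' = (\<lambda>v. v(j := \<zero>)) ` Qi ` G"
    define K' where "K' = {y \<in> vecs R J'. ?h y = vzero R}"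
    have hv: "\<And>x. x \<in> vecs R J \<Longrightarrow> ?h x \<in> vecs R {..<m}" using gmv_vecs[OF finJ' a'c] by blast
    have fQ0: "\<And>x. x \<in> vecs R J \<Longrightarrow> x j = \<zero> \<Longrightarrow> ?f (Q x) = ?h x"
    proof -
      fix x assume x: "x \<in> vecs R J" and xj: "x j = \<zero>"
      have ajc: "\<forall>i'<m. a j i' \<in> carrier R" using ac ji by auto
      show "?f (Q x) = ?h x" unfolding KIx[OF x] xj using vadd_zero_pad[OF hv[OF x] ajc] .
    qed
    have finG'': "finite G''" unfolding G''_def using finG by simp
    have G''K': "G'' \<subseteq> K'"
    proof
      fix y assume "y \<in> G''"
      then obtain g where g: "g \<in> G" "y = (Qi g)(j := \<zero>)" unfolding G''_def by auto
      have gv: "g \<in> vecs R J" "?f g = vzero R" using g GK Kdef by auto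
      have v: "Qi g \<in> vecs R J" using Qiv[OF gv(1)] .
      have fv: "?f (Q (Qi g)) = vzero R" using QQi[OF gv(1)] gv by simp
      have vj: "Qi g j = \<zero>" using claimA[OF v fv] .
      have "y = Qi g" using g vj by auto
      moreover have "(Qi g)(j := \<zero>) \<in> vecs R J'" using upd_zero_vecs[OF v J'_def] .
      ultimately have "y \<in> vecs R J'" using g by simp
      moreover have "?h y = vzero R" using fQ0[OF v vj] fv \<open>y = Qi g\<close> by simp
      ultimately show "y \<in> K'" unfolding K'_def by auto
    qed
    have K'span: "K' \<subseteq> vspan R G''"
    proof
      fix y assume y: "y \<in> K'"
      then have yv': "y \<in> vecs R J'" and hy: "?h y = vzero R" unfolding K'_def by auto
      have yv: "y \<in> vecs R J" using yv' J'sub unfolding vecs_def by auto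
      have yj: "y j = \<zero>" using yv' jn unfolding vecs_def by auto
      have "?f (Q y) = vzero R" using fQ0[OF yv yj] hy by simp
      then have ys: "y \<in> vspan R (Qi ` G)" using fQK[OF yv] by simp
      have "(\<lambda>v. v(j := \<zero>)) y \<in> vspan R ((\<lambda>v. v(j := \<zero>)) ` Qi ` G)"
        by (rule gspan_map[where h = "\<lambda>v. v(j := \<zero>)" and D = UNIV]) (use ys in \<open>auto simp: vzero_def vadd_def vsm_def fun_eq_iff\<close>)
      then show "y \<in> vspan R G''" unfolding G''_def using yj by (simp add: fun_upd_idem)
    qed
    obtain \<sigma>2 where s2: "linmap R J' \<sigma>2" "\<forall>x\<in>vecs R J'. ?h (\<sigma>2 x) = ?h x" "\<forall>x\<in>K'. \<sigma>2 x = vzero R"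
      using less.hyps[OF cardJ' finJ' a'c finG'' G''K' K'span K'_def] by blast
    define \<sigma>1 where "\<sigma>1 = (\<lambda>x. (\<sigma>2 (x(j := \<zero>)))(j := x j))"
    define \<sigma> where "\<sigma> = Q \<circ> \<sigma>1 \<circ> Qi"
    have upd0: "\<And>x. x \<in> vecs R J \<Longrightarrow> x(j := \<zero>) \<in> vecs R J'"
      using upd_zero_vecs J'_def by auto
    have s2v: "\<And>x. x \<in> vecs R J' \<Longrightarrow> \<sigma>2 x \<in> vecs R J'" using s2(1) unfolding linmap_def by auto
    have s2j: "\<And>x. x \<in> vecs R J' \<Longrightarrow> \<sigma>2 x j = \<zero>" using s2v jn unfolding vecs_def by auto
    have lin1: "linmap R J \<sigma>1"
      unfolding linmap_def
    proof (intro conjI ballI)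
      fix x assume x: "x \<in> vecs R J"
      show "\<sigma>1 x \<in> vecs R J"
        using s2v[OF upd0[OF x]] x ji J'sub unfolding \<sigma>1_def vecs_def by auto
    next
      fix x y assume x: "x \<in> vecs R J" and y: "y \<in> vecs R J"
      have "(vadd R x y)(j := \<zero>) = vadd R (x(j := \<zero>)) (y(j := \<zero>))"
        unfolding vadd_def by (auto simp: fun_eq_iff)
      then have "\<sigma>2 ((vadd R x y)(j := \<zero>)) = vadd R (\<sigma>2 (x(j := \<zero>))) (\<sigma>2 (y(j := \<zero>)))"
        using s2(1) upd0[OF x] upd0[OF y] unfolding linmap_def by auto
      then show "\<sigma>1 (vadd R x y) = vadd R (\<sigma>1 x) (\<sigma>1 y)"
        unfolding \<sigma>1_def by (auto simp: fun_eq_iff vadd_def)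
    next
      fix k x assume k: "k \<in> carrier R" and x: "x \<in> vecs R J"
      have "(vsm R k x)(j := \<zero>) = vsm R k (x(j := \<zero>))"
        unfolding vsm_def using k by (auto simp: fun_eq_iff)
      then have "\<sigma>2 ((vsm R k x)(j := \<zero>)) = vsm R k (\<sigma>2 (x(j := \<zero>)))"
        using s2(1) upd0[OF x] k unfolding linmap_def by auto
      then show "\<sigma>1 (vsm R k x) = vsm R k (\<sigma>1 x)"
        unfolding \<sigma>1_def by (auto simp: fun_eq_iff vsm_def)
    qed
    have lin: "linmap R J \<sigma>" unfolding \<sigma>_def using linmap_comp[OF linmap_comp[OF linQ lin1] linQi] .
    have s1v: "\<And>x. x \<in> vecs R J \<Longrightarrow> \<sigma>1 x \<in> vecs R J" using lin1 unfolding linmap_def by auto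
    have hs1: "\<And>x. x \<in> vecs R J \<Longrightarrow> ?h (\<sigma>1 x) = ?h x"
    proof -
      fix x assume x: "x \<in> vecs R J"
      have "?h (\<sigma>1 x) = ?h (\<sigma>2 (x(j := \<zero>)))"
        using a'c s2v[OF upd0[OF x]] jn by (intro gmv_cong) (auto simp: \<sigma>1_def vecs_carrier)
      also have "\<dots> = ?h (x(j := \<zero>))" using s2(2) upd0[OF x] by auto
      also have "\<dots> = ?h x"
        using a'c x jn by (intro gmv_cong) (auto simp: vecs_carrier)
      finally show "?h (\<sigma>1 x) = ?h x" .
    qed
    have prop1: "\<forall>x\<in>vecs R J. ?f (\<sigma> x) = ?f x"
    proof
      fix x assume x: "x \<in> vecs R J"
      have v: "Qi x \<in> vecs R J" using Qiv[OF x] .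
      have "?f (\<sigma> x) = ?f (Q (\<sigma>1 (Qi x)))" unfolding \<sigma>_def by simp
      also have "\<dots> = vadd R (\<lambda>i'. if i' < m then a j i' \<otimes> \<sigma>1 (Qi x) j else \<zero>) (?h (\<sigma>1 (Qi x)))"
        using KIx[OF s1v[OF v]] .
      also have "\<dots> = vadd R (\<lambda>i'. if i' < m then a j i' \<otimes> Qi x j else \<zero>) (?h (Qi x))"
      proof -
        have e1: "\<sigma>1 (Qi x) j = Qi x j" unfolding \<sigma>1_def by simp
        show ?thesis by (simp only: e1 hs1[OF v])
      qed
      also have "\<dots> = ?f (Q (Qi x))" using KIx[OF v] by simp
      also have "\<dots> = ?f x" using QQi[OF x] by simp
      finally show "?f (\<sigma> x) = ?f x" .
    qed
    have prop2: "\<forall>x\<in>K. \<sigma> x = vzero R"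
    proof
      fix x assume "x \<in> K"
      then have x: "x \<in> vecs R J" and fx: "?f x = vzero R" using Kdef by auto
      have v: "Qi x \<in> vecs R J" using Qiv[OF x] .
      have fv: "?f (Q (Qi x)) = vzero R" using QQi[OF x] fx by simp
      have vj: "Qi x j = \<zero>" using claimA[OF v fv] .
      have w: "(Qi x)(j := \<zero>) = Qi x" using vj by auto
      have "Qi x \<in> vecs R J'" using upd0[OF v] w by simp
      moreover have "?h (Qi x) = vzero R" using fQ0[OF v vj] fv by simp
      ultimately have "Qi x \<in> K'" unfolding K'_def by auto
      then have "\<sigma>2 (Qi x) = vzero R" using s2(3) by auto
      moreover have "\<sigma>1 (Qi x) = (\<sigma>2 (Qi x))(j := Qi x j)" unfolding \<sigma>1_def w by simp
      ultimately have "\<sigma>1 (Qi x) = vzero R" using vj by (simp add: vzero_def fun_eq_iff)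
      then show "\<sigma> x = vzero R" unfolding \<sigma>_def using Qz by simp
    qed
    show ?thesis using lin prop1 prop2 by blast
  qed
qed

end

locale locM = cring R for R (structure) +
  fixes M assumes maxM: "maximalideal M R"
begin

abbreviation "S \<equiv> carrier R - M"
abbreviation "V \<equiv> localization R M"
definition phi :: "'a \<Rightarrow> ('a \<times> 'a) set" where "phi a = loc_class R M a \<one>"

lemma M_sub: "M \<subseteq> carrier R"
  using maxM unfolding maximalideal_def ideal_def additive_subgroup_def subgroup_def by auto

lemma one_S: "\<one> \<in> S"
proof -
  interpret maximalideal M R by (rule maxM)
  have "\<one> \<notin> M" using one_imp_carrier I_notcarr by auto
  then show ?thesis by simp
qed

lemma mult_S: "s \<in> S \<Longrightarrow> t \<in> S \<Longrightarrow> s \<otimes> t \<in> S"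
proof -
  assume s: "s \<in> S" and t: "t \<in> S"
  interpret primeideal M R using maximalideal_prime[OF maxM] .
  show ?thesis using s t I_prime[of s t] by auto
qed

lemma alg_m1: "\<lbrakk>u \<in> carrier R; u' \<in> carrier R; a0 \<in> carrier R; b0 \<in> carrier R; s \<in> carrier R; t \<in> carrier R\<rbrakk>
  \<Longrightarrow> (u \<otimes> u') \<otimes> (a0 \<otimes> b0) \<otimes> (s \<otimes> t) = (u \<otimes> a0 \<otimes> s) \<otimes> (u' \<otimes> b0 \<otimes> t)"
  by algebra

lemma alg_a1: "\<lbrakk>u \<in> carrier R; u' \<in> carrier R; a0 \<in> carrier R; b0 \<in> carrier R; s \<in> carrier R; t \<in> carrier R;
    s0 \<in> carrier R; t0 \<in> carrier R\<rbrakk>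
  \<Longrightarrow> (u \<otimes> u') \<otimes> (a0 \<otimes> t0 \<oplus> b0 \<otimes> s0) \<otimes> (s \<otimes> t) =
      (u \<otimes> a0 \<otimes> s) \<otimes> (u' \<otimes> t0 \<otimes> t) \<oplus> (u' \<otimes> b0 \<otimes> t) \<otimes> (u \<otimes> s0 \<otimes> s)"
  by algebra

lemma rel_iff:
  "((a, s), (b, t)) \<in> loc_rel R M \<longleftrightarrow> a \<in> carrier R \<and> s \<in> S \<and> b \<in> carrier R \<and> t \<in> S \<and>
     (\<exists>u\<in>S. u \<otimes> a \<otimes> t = u \<otimes> b \<otimes> s)"
  unfolding loc_rel_def by auto

lemma rel_equiv: "equiv (carrier R \<times> S) (loc_rel R M)"
proof (rule equivI)
  show "refl_on (carrier R \<times> S) (loc_rel R M)"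
    unfolding refl_on_def using one_S by (auto simp: rel_iff intro!: bexI[of _ \<one>])
  show "sym (loc_rel R M)"
    unfolding sym_def by (auto simp: rel_iff) (metis DiffI)
  show "trans (loc_rel R M)"
  proof (rule transI)
    fix x y z assume xy: "(x, y) \<in> loc_rel R M" and yz: "(y, z) \<in> loc_rel R M"
    obtain a s where x: "x = (a, s)" by fastforce
    obtain b t where y: "y = (b, t)" by fastforce
    obtain c r where z: "z = (c, r)" by fastforce
    from xy yz obtain u u' where
      c: "a \<in> carrier R" "s \<in> S" "b \<in> carrier R" "t \<in> S" "c \<in> carrier R" "r \<in> S" "u \<in> S" "u' \<in> S"
      and e1: "u \<otimes> a \<otimes> t = u \<otimes> b \<otimes> s" and e2: "u' \<otimes> b \<otimes> r = u' \<otimes> c \<otimes> t"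
      unfolding x y z rel_iff by auto
    have w: "u \<otimes> u' \<otimes> t \<in> S" using c mult_S by auto
    have cc: "a \<in> carrier R" "s \<in> carrier R" "b \<in> carrier R" "t \<in> carrier R" "c \<in> carrier R" "r \<in> carrier R"
      "u \<in> carrier R" "u' \<in> carrier R" using c by auto
    have "(u \<otimes> u' \<otimes> t) \<otimes> a \<otimes> r = (u \<otimes> a \<otimes> t) \<otimes> (u' \<otimes> r)" using cc by algebra
    also have "\<dots> = (u \<otimes> b \<otimes> s) \<otimes> (u' \<otimes> r)" using e1 by simp
    also have "\<dots> = (u' \<otimes> b \<otimes> r) \<otimes> (u \<otimes> s)" using cc by algebra
    also have "\<dots> = (u' \<otimes> c \<otimes> t) \<otimes> (u \<otimes> s)" using e2 by simp
    also have "\<dots> = (u \<otimes> u' \<otimes> t) \<otimes> c \<otimes> s" using cc by algebra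
    finally show "(x, z) \<in> loc_rel R M" unfolding x z rel_iff using c w by auto
  qed
  show "loc_rel R M \<subseteq> (carrier R \<times> S) \<times> carrier R \<times> S" unfolding loc_rel_def by auto
qed

lemma class_eq_iff:
  assumes "a \<in> carrier R" "s \<in> S" "b \<in> carrier R" "t \<in> S"
  shows "loc_class R M a s = loc_class R M b t \<longleftrightarrow> (\<exists>u\<in>S. u \<otimes> a \<otimes> t = u \<otimes> b \<otimes> s)"
  using equiv_class_eq_iff[OF rel_equiv, of "(a, s)" "(b, t)"] assms
  unfolding loc_class_def by (auto simp: rel_iff)

lemma class_mem: "a \<in> carrier R \<Longrightarrow> s \<in> S \<Longrightarrow> (a, s) \<in> loc_class R M a s"
  unfolding loc_class_def using rel_equiv unfolding equiv_def refl_on_def by auto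

lemma class_memD:
  assumes "(a', s') \<in> loc_class R M a s"
  shows "a \<in> carrier R \<and> s \<in> S \<and> a' \<in> carrier R \<and> s' \<in> S \<and> (\<exists>u\<in>S. u \<otimes> a \<otimes> s' = u \<otimes> a' \<otimes> s)"
  using assms unfolding loc_class_def by (auto simp: rel_iff)

lemma carrier_V: "carrier V = {loc_class R M a s | a s. a \<in> carrier R \<and> s \<in> S}"
  unfolding localization_def quotient_def loc_class_def by auto

lemma class_in_V: "a \<in> carrier R \<Longrightarrow> s \<in> S \<Longrightarrow> loc_class R M a s \<in> carrier V"
  unfolding carrier_V by auto

lemma mult_class:
  assumes a: "a \<in> carrier R" "s \<in> S" and b: "b \<in> carrier R" "t \<in> S"
  shows "loc_class R M a s \<otimes>\<^bsub>V\<^esub> loc_class R M b t = loc_class R M (a \<otimes> b) (s \<otimes> t)"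
proof -
  have st: "s \<otimes> t \<in> S" using mult_S a b by auto
  have each: "loc_class R M (a' \<otimes> b') (s' \<otimes> t') = loc_class R M (a \<otimes> b) (s \<otimes> t)"
    if m1: "(a', s') \<in> loc_class R M a s" and m2: "(b', t') \<in> loc_class R M b t" for a' s' b' t'
  proof -
    obtain u where u: "u \<in> S" "u \<otimes> a \<otimes> s' = u \<otimes> a' \<otimes> s" and c1: "a' \<in> carrier R" "s' \<in> S"
      using class_memD[OF m1] by auto
    obtain u' where u': "u' \<in> S" "u' \<otimes> b \<otimes> t' = u' \<otimes> b' \<otimes> t" and c2: "b' \<in> carrier R" "t' \<in> S"
      using class_memD[OF m2] by auto
    have st': "s' \<otimes> t' \<in> S" using mult_S c1 c2 by auto
    have "(u \<otimes> u') \<otimes> (a' \<otimes> b') \<otimes> (s \<otimes> t) = (u \<otimes> a' \<otimes> s) \<otimes> (u' \<otimes> b' \<otimes> t)"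
      using alg_m1 u u' c1 c2 a b by auto
    also have "\<dots> = (u \<otimes> a \<otimes> s') \<otimes> (u' \<otimes> b \<otimes> t')" using u u' by simp
    also have "\<dots> = (u \<otimes> u') \<otimes> (a \<otimes> b) \<otimes> (s' \<otimes> t')"
      using alg_m1[of u u' a b s' t'] u u' c1 c2 a b by auto
    finally show ?thesis using class_eq_iff[of "a' \<otimes> b'" "s' \<otimes> t'" "a \<otimes> b" "s \<otimes> t"] st st' mult_S u u' c1 c2 a b
      by (auto intro!: bexI[of _ "u \<otimes> u'"])
  qed
  have "loc_mult R M (loc_class R M a s) (loc_class R M b t) = loc_class R M (a \<otimes> b) (s \<otimes> t)"
    unfolding loc_mult_def
  proof
    show "\<Union>{loc_class R M (a' \<otimes> b') (s' \<otimes> t') |a' s' b' t'. (a', s') \<in> loc_class R M a s \<and> (b', t') \<in> loc_class R M b t}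
        \<subseteq> loc_class R M (a \<otimes> b) (s \<otimes> t)" using each by blast
    show "loc_class R M (a \<otimes> b) (s \<otimes> t) \<subseteq> \<Union>{loc_class R M (a' \<otimes> b') (s' \<otimes> t') |a' s' b' t'. (a', s') \<in> loc_class R M a s \<and> (b', t') \<in> loc_class R M b t}"
      using class_mem[OF a] class_mem[OF b] by blast
  qed
  then show ?thesis unfolding localization_def by simp
qed

lemma add_class:
  assumes a: "a \<in> carrier R" "s \<in> S" and b: "b \<in> carrier R" "t \<in> S"
  shows "loc_class R M a s \<oplus>\<^bsub>V\<^esub> loc_class R M b t = loc_class R M (a \<otimes> t \<oplus> b \<otimes> s) (s \<otimes> t)"
proof -
  have st: "s \<otimes> t \<in> S" using mult_S a b by auto
  have each: "loc_class R M (a' \<otimes> t' \<oplus> b' \<otimes> s') (s' \<otimes> t') = loc_class R M (a \<otimes> t \<oplus> b \<otimes> s) (s \<otimes> t)"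
    if m1: "(a', s') \<in> loc_class R M a s" and m2: "(b', t') \<in> loc_class R M b t" for a' s' b' t'
  proof -
    obtain u where u: "u \<in> S" "u \<otimes> a \<otimes> s' = u \<otimes> a' \<otimes> s" and c1: "a' \<in> carrier R" "s' \<in> S"
      using class_memD[OF m1] by auto
    obtain u' where u': "u' \<in> S" "u' \<otimes> b \<otimes> t' = u' \<otimes> b' \<otimes> t" and c2: "b' \<in> carrier R" "t' \<in> S"
      using class_memD[OF m2] by auto
    have st': "s' \<otimes> t' \<in> S" using mult_S c1 c2 by auto
    have "(u \<otimes> u') \<otimes> (a' \<otimes> t' \<oplus> b' \<otimes> s') \<otimes> (s \<otimes> t) =
        (u \<otimes> a' \<otimes> s) \<otimes> (u' \<otimes> t' \<otimes> t) \<oplus> (u' \<otimes> b' \<otimes> t) \<otimes> (u \<otimes> s' \<otimes> s)"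
      using alg_a1 u u' c1 c2 a b by auto
    also have "\<dots> = (u \<otimes> a \<otimes> s') \<otimes> (u' \<otimes> t \<otimes> t') \<oplus> (u' \<otimes> b \<otimes> t') \<otimes> (u \<otimes> s \<otimes> s')"
    proof -
      have "u' \<otimes> t' \<otimes> t = u' \<otimes> t \<otimes> t'" "u \<otimes> s' \<otimes> s = u \<otimes> s \<otimes> s'"
        using u u' c1 c2 a b by (simp_all add: m_assoc m_comm m_lcomm)
      then show ?thesis using u u' by simp
    qed
    also have "\<dots> = (u \<otimes> u') \<otimes> (a \<otimes> t \<oplus> b \<otimes> s) \<otimes> (s' \<otimes> t')"
      using alg_a1[of u u' a b s' t' s t] u u' c1 c2 a b by auto
    finally show ?thesis
      using class_eq_iff[of "a' \<otimes> t' \<oplus> b' \<otimes> s'" "s' \<otimes> t'" "a \<otimes> t \<oplus> b \<otimes> s" "s \<otimes> t"] st st' mult_S u u' c1 c2 a b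
      by (auto intro!: bexI[of _ "u \<otimes> u'"])
  qed
  have "loc_add R M (loc_class R M a s) (loc_class R M b t) = loc_class R M (a \<otimes> t \<oplus> b \<otimes> s) (s \<otimes> t)"
    unfolding loc_add_def
  proof
    show "\<Union>{loc_class R M (a' \<otimes> t' \<oplus> b' \<otimes> s') (s' \<otimes> t') |a' s' b' t'. (a', s') \<in> loc_class R M a s \<and> (b', t') \<in> loc_class R M b t}
        \<subseteq> loc_class R M (a \<otimes> t \<oplus> b \<otimes> s) (s \<otimes> t)" using each by blast
    show "loc_class R M (a \<otimes> t \<oplus> b \<otimes> s) (s \<otimes> t) \<subseteq> \<Union>{loc_class R M (a' \<otimes> t' \<oplus> b' \<otimes> s') (s' \<otimes> t') |a' s' b' t'. (a', s') \<in> loc_class R M a s \<and> (b', t') \<in> loc_class R M b t}"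
      using class_mem[OF a] class_mem[OF b] by blast
  qed
  then show ?thesis unfolding localization_def by simp
qed

lemma zero_V: "\<zero>\<^bsub>V\<^esub> = loc_class R M \<zero> \<one>" unfolding localization_def by simp
lemma one_V: "\<one>\<^bsub>V\<^esub> = loc_class R M \<one> \<one>" unfolding localization_def by simp

lemma phi_hom: "phi \<in> ring_hom R V"
proof (rule ring_hom_memI)
  show "\<And>x. x \<in> carrier R \<Longrightarrow> phi x \<in> carrier V" unfolding phi_def using class_in_V one_S by auto
  show "\<And>x y. x \<in> carrier R \<Longrightarrow> y \<in> carrier R \<Longrightarrow> phi (x \<otimes> y) = phi x \<otimes>\<^bsub>V\<^esub> phi y"
    unfolding phi_def using mult_class one_S by simp
  show "\<And>x y. x \<in> carrier R \<Longrightarrow> y \<in> carrier R \<Longrightarrow> phi (x \<oplus> y) = phi x \<oplus>\<^bsub>V\<^esub> phi y"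
    unfolding phi_def using add_class one_S by simp
  show "phi \<one> = \<one>\<^bsub>V\<^esub>" unfolding phi_def one_V ..
qed

lemma phi_zero_iff:
  assumes "b \<in> carrier R" "phi b = \<zero>\<^bsub>V\<^esub>"
  shows "\<exists>u\<in>S. u \<otimes> b = \<zero>"
proof -
  have "loc_class R M b \<one> = loc_class R M \<zero> \<one>" using assms unfolding phi_def zero_V by simp
  then obtain u where "u \<in> S" "u \<otimes> b \<otimes> \<one> = u \<otimes> \<zero> \<otimes> \<one>" using class_eq_iff one_S assms by auto
  then show ?thesis using assms by auto
qed

lemma denom:
  assumes "v \<in> carrier V"
  shows "\<exists>t\<in>S. \<exists>a\<in>carrier R. phi t \<otimes>\<^bsub>V\<^esub> v = phi a"
proof -
  obtain a t where at: "a \<in> carrier R" "t \<in> S" "v = loc_class R M a t" using assms unfolding carrier_V by auto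
  have "phi t \<otimes>\<^bsub>V\<^esub> v = loc_class R M (t \<otimes> a) (\<one> \<otimes> t)" unfolding phi_def using at mult_class one_S by simp
  also have "\<dots> = phi a" unfolding phi_def
    using class_eq_iff[of "t \<otimes> a" "\<one> \<otimes> t" a \<one>] at one_S mult_S
    by (auto intro!: bexI[of _ \<one>] simp: m_comm m_lcomm)
  finally show ?thesis using at by auto
qed

lemma phi_unit:
  assumes "s \<in> S"
  shows "\<exists>w\<in>carrier V. phi s \<otimes>\<^bsub>V\<^esub> w = \<one>\<^bsub>V\<^esub>"
proof -
  have "phi s \<otimes>\<^bsub>V\<^esub> loc_class R M \<one> s = loc_class R M (s \<otimes> \<one>) (\<one> \<otimes> s)"
    unfolding phi_def using mult_class one_S assms by simp
  also have "\<dots> = \<one>\<^bsub>V\<^esub>" unfolding one_V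
    using class_eq_iff[of "s \<otimes> \<one>" "\<one> \<otimes> s" \<one> \<one>] assms one_S by (auto intro!: bexI[of _ \<one>])
  finally show ?thesis using class_in_V[of \<one> s] assms by auto
qed

end

definition matmul :: "('a, 'm) ring_scheme \<Rightarrow> (nat \<Rightarrow> nat \<Rightarrow> 'a) \<Rightarrow> (nat \<Rightarrow> nat \<Rightarrow> 'a) \<Rightarrow> nat \<Rightarrow> nat \<Rightarrow> nat \<Rightarrow> 'a" where
  "matmul R A B n = (\<lambda>r c. \<Oplus>\<^bsub>R\<^esub> j \<in> {..<n}. A r j \<otimes>\<^bsub>R\<^esub> B j c)"

definition matok :: "('a, 'm) ring_scheme \<Rightarrow> (nat \<Rightarrow> nat \<Rightarrow> 'a) \<Rightarrow> nat \<Rightarrow> nat \<Rightarrow> bool" where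
  "matok R A m n \<longleftrightarrow> (\<forall>r<m. \<forall>c<n. A r c \<in> carrier R)"

context cring
begin

lemma finsum_delta:
  assumes "finite A" "l \<in> A" "f \<in> A \<rightarrow> carrier R"
  shows "(\<Oplus>d\<in>A. f d \<otimes> (if d = l then \<one> else \<zero>)) = f l"
proof -
  have "(\<Oplus>d\<in>A. f d \<otimes> (if d = l then \<one> else \<zero>)) = (\<Oplus>d\<in>A. if l = d then f d else \<zero>)"
    using assms by (intro finsum_cong') (auto simp: Pi_def)
  also have "\<dots> = f l" using finsum_singleton[OF assms(2,1,3)] .
  finally show ?thesis .
qed

lemma finsum_swap:
  assumes "finite A" "finite B" "\<forall>a\<in>A. \<forall>b\<in>B. f a b \<in> carrier R"
  shows "(\<Oplus>a\<in>A. \<Oplus>b\<in>B. f a b) = (\<Oplus>b\<in>B. \<Oplus>a\<in>A. f a b)"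
  using assms
proof (induction A rule: finite_induct)
  case empty then show ?case by (simp add: finsum_zero)
next
  case (insert a A)
  have fa: "(\<lambda>b. f a b) \<in> B \<rightarrow> carrier R" using insert by auto
  have fA: "(\<lambda>b. \<Oplus>a\<in>A. f a b) \<in> B \<rightarrow> carrier R" using insert by (auto intro!: finsum_closed)
  have "(\<Oplus>a\<in>insert a A. \<Oplus>b\<in>B. f a b) = (\<Oplus>b\<in>B. f a b) \<oplus> (\<Oplus>a\<in>A. \<Oplus>b\<in>B. f a b)"
    using insert by (intro finsum_insert) (auto intro!: finsum_closed)
  also have "\<dots> = (\<Oplus>b\<in>B. f a b) \<oplus> (\<Oplus>b\<in>B. \<Oplus>a\<in>A. f a b)" using insert by simp
  also have "\<dots> = (\<Oplus>b\<in>B. f a b \<oplus> (\<Oplus>a\<in>A. f a b))" using finsum_addf[OF fa fA] by simp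
  also have "\<dots> = (\<Oplus>b\<in>B. \<Oplus>a\<in>insert a A. f a b)"
    using insert by (intro finsum_cong') (auto intro!: finsum_closed)
  finally show ?case .
qed

lemma matvec_matvec:
  assumes A: "matok R A m n" and B: "matok R B n k" and x: "x \<in> fvec R k"
  shows "matvec R A m n (matvec R B n k x) = matvec R (matmul R A B n) m k x"
proof (rule ext)
  fix r
  show "matvec R A m n (matvec R B n k x) r = matvec R (matmul R A B n) m k x r"
  proof (cases "r < m")
    case False then show ?thesis unfolding matvec_def by simp
  next
    case True
    have xc: "\<And>c. c < k \<Longrightarrow> x c \<in> carrier R" using x unfolding fvec_def by auto
    have Ac: "\<And>j. j < n \<Longrightarrow> A r j \<in> carrier R" using A True unfolding matok_def by auto
    have Bc: "\<And>j c. j < n \<Longrightarrow> c < k \<Longrightarrow> B j c \<in> carrier R" using B unfolding matok_def by auto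
    have "(\<Oplus>j\<in>{..<n}. A r j \<otimes> matvec R B n k x j) = (\<Oplus>j\<in>{..<n}. \<Oplus>c\<in>{..<k}. A r j \<otimes> (B j c \<otimes> x c))"
    proof (rule finsum_cong')
      fix j assume j: "j \<in> {..<n}"
      then have "A r j \<otimes> matvec R B n k x j = A r j \<otimes> (\<Oplus>c\<in>{..<k}. B j c \<otimes> x c)" unfolding matvec_def by simp
      also have "\<dots> = (\<Oplus>c\<in>{..<k}. A r j \<otimes> (B j c \<otimes> x c))"
        using j Ac Bc xc by (intro finsum_rdistr) auto
      finally show "A r j \<otimes> matvec R B n k x j = (\<Oplus>c\<in>{..<k}. A r j \<otimes> (B j c \<otimes> x c))" .
    qed (use Ac Bc xc in \<open>auto intro!: finsum_closed\<close>)
    also have "\<dots> = (\<Oplus>c\<in>{..<k}. \<Oplus>j\<in>{..<n}. A r j \<otimes> (B j c \<otimes> x c))"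
      using Ac Bc xc by (intro finsum_swap) auto
    also have "\<dots> = (\<Oplus>c\<in>{..<k}. matmul R A B n r c \<otimes> x c)"
    proof (rule finsum_cong')
      fix c assume c: "c \<in> {..<k}"
      have "(\<Oplus>j\<in>{..<n}. A r j \<otimes> (B j c \<otimes> x c)) = (\<Oplus>j\<in>{..<n}. A r j \<otimes> B j c \<otimes> x c)"
        using c Ac Bc xc by (intro finsum_cong') (auto simp: m_assoc)
      also have "\<dots> = (\<Oplus>j\<in>{..<n}. A r j \<otimes> B j c) \<otimes> x c"
        using c Ac Bc xc by (intro finsum_ldistr[symmetric]) auto
      finally show "(\<Oplus>j\<in>{..<n}. A r j \<otimes> (B j c \<otimes> x c)) = matmul R A B n r c \<otimes> x c"
        unfolding matmul_def by simp
    qed (use Ac Bc xc in \<open>auto intro!: finsum_closed simp: matmul_def\<close>)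
    finally show ?thesis unfolding matvec_def using True by simp
  qed
qed

lemma matvec_fvec:
  assumes A: "matok R A m k" and x: "\<forall>c<k. x c \<in> carrier R"
  shows "matvec R A m k x \<in> fvec R m"
  using A x unfolding matok_def fvec_def matvec_def by (auto intro!: finsum_closed)

lemma matvec_add:
  assumes A: "matok R A m k" and x: "x \<in> fvec R k" and y: "y \<in> fvec R k"
  shows "matvec R A m k (\<lambda>c. x c \<oplus> y c) = (\<lambda>r. matvec R A m k x r \<oplus> matvec R A m k y r)"
proof (rule ext)
  fix r
  have xc: "\<And>c. c < k \<Longrightarrow> x c \<in> carrier R" "\<And>c. c < k \<Longrightarrow> y c \<in> carrier R" using x y unfolding fvec_def by auto
  show "matvec R A m k (\<lambda>c. x c \<oplus> y c) r = matvec R A m k x r \<oplus> matvec R A m k y r"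
  proof (cases "r < m")
    case True
    have Ac: "\<And>c. c < k \<Longrightarrow> A r c \<in> carrier R" using A True unfolding matok_def by auto
    have "(\<Oplus>c\<in>{..<k}. A r c \<otimes> (x c \<oplus> y c)) = (\<Oplus>c\<in>{..<k}. A r c \<otimes> x c \<oplus> A r c \<otimes> y c)"
      using Ac xc by (intro finsum_cong') (auto simp: r_distr)
    also have "\<dots> = (\<Oplus>c\<in>{..<k}. A r c \<otimes> x c) \<oplus> (\<Oplus>c\<in>{..<k}. A r c \<otimes> y c)"
      using Ac xc by (intro finsum_addf) auto
    finally show ?thesis unfolding matvec_def using True by simp
  qed (simp add: matvec_def)
qed

lemma matvec_smul:
  assumes A: "matok R A m k" and x: "x \<in> fvec R k" and u: "u \<in> carrier R"
  shows "matvec R A m k (\<lambda>c. u \<otimes> x c) = (\<lambda>r. u \<otimes> matvec R A m k x r)"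
proof (rule ext)
  fix r
  have xc: "\<And>c. c < k \<Longrightarrow> x c \<in> carrier R" using x unfolding fvec_def by auto
  show "matvec R A m k (\<lambda>c. u \<otimes> x c) r = u \<otimes> matvec R A m k x r"
  proof (cases "r < m")
    case True
    have Ac: "\<And>c. c < k \<Longrightarrow> A r c \<in> carrier R" using A True unfolding matok_def by auto
    have "(\<Oplus>c\<in>{..<k}. A r c \<otimes> (u \<otimes> x c)) = (\<Oplus>c\<in>{..<k}. u \<otimes> (A r c \<otimes> x c))"
      using Ac xc u by (intro finsum_cong') (auto simp: m_lcomm)
    also have "\<dots> = u \<otimes> (\<Oplus>c\<in>{..<k}. A r c \<otimes> x c)"
      using Ac xc u by (intro finsum_rdistr[symmetric]) auto
    finally show ?thesis unfolding matvec_def using True by simp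
  qed (simp add: matvec_def u)
qed

lemma matvec_cong:
  assumes "\<And>r c. r < m \<Longrightarrow> c < k \<Longrightarrow> A r c = B r c" "matok R B m k" "\<forall>c<k. x c \<in> carrier R"
  shows "matvec R A m k x = matvec R B m k x"
  unfolding matvec_def using assms unfolding matok_def by (auto intro!: finsum_cong' simp: fun_eq_iff)

lemma krull:
  assumes I: "ideal I R" and one: "\<one> \<notin> I"
  shows "\<exists>M. maximalideal M R \<and> I \<subseteq> M"
proof -
  define \<A> where "\<A> = {J. ideal J R \<and> I \<subseteq> J \<and> \<one> \<notin> J}"
  have ne: "\<A> \<noteq> {}" using I one unfolding \<A>_def by auto
  have "\<exists>M\<in>\<A>. \<forall>X\<in>\<A>. M \<subseteq> X \<longrightarrow> X = M"
  proof (rule subset_Zorn_nonempty[OF ne])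
    fix \<C> assume Cne: "\<C> \<noteq> {}" and ch: "subset.chain \<A> \<C>"
    have CA: "\<C> \<subseteq> \<A>" and tot: "\<And>X Y. X \<in> \<C> \<Longrightarrow> Y \<in> \<C> \<Longrightarrow> X \<subseteq> Y \<or> Y \<subseteq> X"
      using ch unfolding subset_chain_def by auto
    have idl: "\<And>X. X \<in> \<C> \<Longrightarrow> ideal X R" using CA unfolding \<A>_def by auto
    obtain X0 where X0: "X0 \<in> \<C>" using Cne by auto
    have asg: "\<And>X. X \<in> \<C> \<Longrightarrow> additive_subgroup X R" using idl ideal.axioms(1) by blast
    have sub: "\<Union>\<C> \<subseteq> carrier R"
    proof
      fix x assume "x \<in> \<Union>\<C>"
      then obtain X where X: "X \<in> \<C>" "x \<in> X" by auto
      then show "x \<in> carrier R" using additive_subgroup.a_subset[OF asg[OF X(1)]] by auto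
    qed
    have "ideal (\<Union>\<C>) R"
    proof (rule idealI[OF ring_axioms])
      show "subgroup (\<Union>\<C>) (add_monoid R)"
      proof
        show "\<Union>\<C> \<subseteq> carrier (add_monoid R)" using sub by simp
        have "\<zero> \<in> X0" using additive_subgroup.zero_closed[OF asg[OF X0]] .
        then show "\<one>\<^bsub>add_monoid R\<^esub> \<in> \<Union>\<C>" using X0 by auto
        fix x y assume x: "x \<in> \<Union>\<C>" and y: "y \<in> \<Union>\<C>"
        then obtain X Y where XY: "X \<in> \<C>" "x \<in> X" "Y \<in> \<C>" "y \<in> Y" by auto
        show "x \<otimes>\<^bsub>add_monoid R\<^esub> y \<in> \<Union>\<C>"
        proof (cases "X \<subseteq> Y")
          case True
          then have "x \<oplus> y \<in> Y" using XY additive_subgroup.a_closed[OF asg[OF XY(3)]] by blast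
          then show ?thesis using XY by auto
        next
          case False
          then have "Y \<subseteq> X" using tot XY by blast
          then have "x \<oplus> y \<in> X" using XY additive_subgroup.a_closed[OF asg[OF XY(1)]] by blast
          then show ?thesis using XY by auto
        qed
      next
        fix x assume "x \<in> \<Union>\<C>"
        then obtain X where X: "X \<in> \<C>" "x \<in> X" by auto
        then have "\<ominus> x \<in> X" using additive_subgroup.a_inv_closed[OF asg[OF X(1)]] by blast
        then show "inv\<^bsub>add_monoid R\<^esub> x \<in> \<Union>\<C>" using X by (auto simp: a_inv_def)
      qed
      fix a x assume "a \<in> \<Union>\<C>" "x \<in> carrier R"
      then obtain X where X: "X \<in> \<C>" "a \<in> X" by auto
      have "x \<otimes> a \<in> X" "a \<otimes> x \<in> X"
        using ideal.I_l_closed[OF idl[OF X(1)] X(2)] ideal.I_r_closed[OF idl[OF X(1)] X(2)] \<open>x \<in> carrier R\<close> by auto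
      then show "x \<otimes> a \<in> \<Union>\<C>" "a \<otimes> x \<in> \<Union>\<C>" using X by auto
    qed
    moreover have "I \<subseteq> \<Union>\<C>" using X0 CA unfolding \<A>_def by auto
    moreover have "\<one> \<notin> \<Union>\<C>" using CA unfolding \<A>_def by auto
    ultimately show "\<Union>\<C> \<in> \<A>" unfolding \<A>_def by auto
  qed
  then obtain M where M: "M \<in> \<A>" "\<forall>X\<in>\<A>. M \<subseteq> X \<longrightarrow> X = M" by auto
  have "maximalideal M R"
  proof (rule maximalidealI)
    show "ideal M R" using M unfolding \<A>_def by auto
    show "carrier R \<noteq> M" using M unfolding \<A>_def by auto
    fix J assume J: "ideal J R" "M \<subseteq> J" "J \<subseteq> carrier R"
    show "J = M \<or> J = carrier R"
    proof (cases "\<one> \<in> J")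
      case True then show ?thesis using ideal.one_imp_carrier[OF J(1)] by auto
    next
      case False
      then have "J \<in> \<A>" using J M unfolding \<A>_def by auto
      then show ?thesis using M J by auto
    qed
  qed
  then show ?thesis using M unfolding \<A>_def by auto
qed

end

context cring
begin

lemma span_sum:
  assumes "finite L" "\<forall>l\<in>L. \<beta> l \<in> carrier R" "\<forall>l\<in>L. g l \<in> G" "G \<subseteq> vecs R J"
  shows "(\<lambda>c. \<Oplus>l\<in>L. \<beta> l \<otimes> g l c) \<in> vspan R G"
  using assms
proof (induction L rule: finite_induct)
  case empty
  have "(\<lambda>c. \<Oplus>l\<in>{}. \<beta> l \<otimes> g l c) = vzero R" unfolding vzero_def by simp
  then show ?case using gspan.gs_zero by metis
next
  case (insert l0 L)
  have gc: "\<And>l c. l \<in> insert l0 L \<Longrightarrow> g l c \<in> carrier R" using insert vecs_carrier by blast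
  have "(\<lambda>c. \<Oplus>l\<in>insert l0 L. \<beta> l \<otimes> g l c) = vadd R (vsm R (\<beta> l0) (g l0)) (\<lambda>c. \<Oplus>l\<in>L. \<beta> l \<otimes> g l c)"
    unfolding vadd_def vsm_def using insert gc by (auto simp: fun_eq_iff Pi_def)
  moreover have "vsm R (\<beta> l0) (g l0) \<in> vspan R G"
  proof -
    have "g l0 \<in> vspan R G" by (rule gspan.gs_gen) (use insert in auto)
    then show ?thesis using insert by (auto intro: gspan.gs_sm)
  qed
  moreover have "(\<lambda>c. \<Oplus>l\<in>L. \<beta> l \<otimes> g l c) \<in> vspan R G" using insert by auto
  ultimately show ?case by (auto intro: gspan.gs_add)
qed

definition ev :: "nat \<Rightarrow> nat \<Rightarrow> 'a" where "ev c = (\<lambda>d. if d = c then \<one> else \<zero>)"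

lemma ev_vecs: "c \<in> J \<Longrightarrow> ev c \<in> vecs R J"
  unfolding ev_def vecs_def by auto

lemma lin_expand:
  assumes lin: "linmap R J \<sigma>" and fin: "finite J" and y: "y \<in> vecs R J"
  shows "\<sigma> y = (\<lambda>r. \<Oplus>c\<in>J. y c \<otimes> \<sigma> (ev c) r)"
proof -
  have sv: "\<And>x. x \<in> vecs R J \<Longrightarrow> \<sigma> x \<in> vecs R J" using lin unfolding linmap_def by auto
  have main: "C \<subseteq> J \<Longrightarrow> \<sigma> (\<lambda>d. if d \<in> C then y d else \<zero>) = (\<lambda>r. \<Oplus>c\<in>C. y c \<otimes> \<sigma> (ev c) r)" for C
  proof (induction C rule: infinite_finite_induct)
    case (infinite C) then show ?case using fin finite_subset by blast
  next
    case empty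
    have "(\<lambda>d. if d \<in> {} then y d else \<zero>) = vzero R" unfolding vzero_def by simp
    then show ?case using linmap_zero[OF lin] unfolding vzero_def by simp
  next
    case (insert c C)
    have cJ: "c \<in> J" and CJ: "C \<subseteq> J" using insert by auto
    have yc: "y c \<in> carrier R" using y vecs_carrier by auto
    have restv: "(\<lambda>d. if d \<in> C then y d else \<zero>) \<in> vecs R J" using y CJ unfolding vecs_def by auto
    have "(\<lambda>d. if d \<in> insert c C then y d else \<zero>) = vadd R (vsm R (y c) (ev c)) (\<lambda>d. if d \<in> C then y d else \<zero>)"
      unfolding vadd_def vsm_def ev_def using insert yc y by (auto simp: fun_eq_iff vecs_carrier)
    then have "\<sigma> (\<lambda>d. if d \<in> insert c C then y d else \<zero>) = vadd R (vsm R (y c) (\<sigma> (ev c))) (\<sigma> (\<lambda>d. if d \<in> C then y d else \<zero>))"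
      using lin ev_vecs[OF cJ] restv yc unfolding linmap_def by auto
    also have "\<dots> = (\<lambda>r. \<Oplus>c\<in>insert c C. y c \<otimes> \<sigma> (ev c) r)"
    proof (rule ext)
      fix r
      have cc: "\<And>c'. c' \<in> J \<Longrightarrow> y c' \<otimes> \<sigma> (ev c') r \<in> carrier R"
      proof -
        fix c' assume "c' \<in> J"
        then have "\<sigma> (ev c') \<in> vecs R J" using sv ev_vecs by blast
        then show "y c' \<otimes> \<sigma> (ev c') r \<in> carrier R" using y by (simp add: vecs_carrier)
      qed
      have "(\<Oplus>c'\<in>insert c C. y c' \<otimes> \<sigma> (ev c') r) = y c \<otimes> \<sigma> (ev c) r \<oplus> (\<Oplus>c'\<in>C. y c' \<otimes> \<sigma> (ev c') r)"
        by (rule finsum_insert[OF insert.hyps(1,2)]) (use cc CJ cJ in auto)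
      then show "vadd R (vsm R (y c) (\<sigma> (ev c))) (\<sigma> (\<lambda>d. if d \<in> C then y d else \<zero>)) r = (\<Oplus>c'\<in>insert c C. y c' \<otimes> \<sigma> (ev c') r)"
        unfolding vadd_def vsm_def using insert.IH[OF CJ] by simp
    qed
    finally show ?case .
  qed
  have "(\<lambda>d. if d \<in> J then y d else \<zero>) = y" using y unfolding vecs_def by auto
  then show ?thesis using main[of J] by simp
qed

lemma gmv_smul:
  assumes "\<forall>l\<in>J. \<forall>i<m. a l i \<in> carrier R" "x \<in> vecs R J'" "u \<in> carrier R" "finite J"
  shows "gmv R a m J (vsm R u x) = vsm R u (gmv R a m J x)"
proof (rule ext)
  fix i
  show "gmv R a m J (vsm R u x) i = vsm R u (gmv R a m J x) i"
  proof (cases "i < m")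
    case True
    have "(\<Oplus>l\<in>J. a l i \<otimes> (u \<otimes> x l)) = (\<Oplus>l\<in>J. u \<otimes> (a l i \<otimes> x l))"
      using assms True by (intro finsum_cong') (auto simp: m_lcomm vecs_carrier)
    also have "\<dots> = u \<otimes> (\<Oplus>l\<in>J. a l i \<otimes> x l)"
      using assms True by (intro finsum_rdistr[symmetric]) (auto simp: vecs_carrier)
    finally show ?thesis unfolding gmv_def vsm_def using True by simp
  qed (simp add: gmv_def vsm_def assms)
qed

end

locale locMV = locM +
  assumes Vp: "pstar_ring (localization R M)"

sublocale locMV \<subseteq> Vr: pstar_ring "localization R M" by (rule Vp)

sublocale locMV \<subseteq> H: ring_hom_cring R "localization R M" phi
  unfolding ring_hom_cring_def ring_hom_cring_axioms_def
  using is_cring Vr.is_cring phi_hom by auto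

context locMV
begin

lemma F1:
  assumes "finite I" "\<forall>i\<in>I. v i \<in> carrier V"
  shows "\<exists>s\<in>S. \<exists>y. \<forall>i\<in>I. y i \<in> carrier R \<and> phi s \<otimes>\<^bsub>V\<^esub> v i = phi (y i)"
  using assms
proof (induction I rule: finite_induct)
  case empty then show ?case using one_S by auto
next
  case (insert k I)
  then obtain s y where sy: "s \<in> S" "\<forall>i\<in>I. y i \<in> carrier R \<and> phi s \<otimes>\<^bsub>V\<^esub> v i = phi (y i)" by auto
  obtain t a where ta: "t \<in> S" "a \<in> carrier R" "phi t \<otimes>\<^bsub>V\<^esub> v k = phi a" using denom insert by blast
  define y' where "y' = (\<lambda>i. if i = k then a \<otimes> s else y i \<otimes> t)"
  have "\<forall>i\<in>insert k I. y' i \<in> carrier R \<and> phi (s \<otimes> t) \<otimes>\<^bsub>V\<^esub> v i = phi (y' i)"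
  proof
    fix i assume i: "i \<in> insert k I"
    have vi: "v i \<in> carrier V" using i insert by auto
    have sc: "s \<in> carrier R" "t \<in> carrier R" using sy ta by auto
    show "y' i \<in> carrier R \<and> phi (s \<otimes> t) \<otimes>\<^bsub>V\<^esub> v i = phi (y' i)"
    proof (cases "i = k")
      case True
      have "phi (s \<otimes> t) \<otimes>\<^bsub>V\<^esub> v i = phi s \<otimes>\<^bsub>V\<^esub> (phi t \<otimes>\<^bsub>V\<^esub> v k)"
        using sc vi True by (simp add: Vr.m_assoc)
      also have "\<dots> = phi (a \<otimes> s)" using ta sc by (simp add: Vr.m_comm)
      finally show ?thesis unfolding y'_def using True ta sc by simp
    next
      case False
      then have iI: "i \<in> I" using i by auto
      have "phi (s \<otimes> t) \<otimes>\<^bsub>V\<^esub> v i = phi t \<otimes>\<^bsub>V\<^esub> (phi s \<otimes>\<^bsub>V\<^esub> v i)"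
        using sc vi by (simp add: Vr.m_lcomm Vr.m_assoc Vr.m_comm)
      also have "\<dots> = phi (y i \<otimes> t)" using sy iI sc by (simp add: Vr.m_comm)
      finally show ?thesis unfolding y'_def using False sy iI sc by simp
    qed
  qed
  moreover have "s \<otimes> t \<in> S" using mult_S sy ta by auto
  ultimately show ?case by blast
qed

lemma F2:
  assumes "finite I" "\<forall>i\<in>I. b i \<in> carrier R \<and> phi (b i) = \<zero>\<^bsub>V\<^esub>"
  shows "\<exists>u\<in>S. \<forall>i\<in>I. u \<otimes> b i = \<zero>"
  using assms
proof (induction I rule: finite_induct)
  case empty then show ?case using one_S by auto
next
  case (insert k I)
  then obtain u where u: "u \<in> S" "\<forall>i\<in>I. u \<otimes> b i = \<zero>" by auto
  obtain u' where u': "u' \<in> S" "u' \<otimes> b k = \<zero>" using phi_zero_iff insert by blast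
  have "\<forall>i\<in>insert k I. (u \<otimes> u') \<otimes> b i = \<zero>"
  proof
    fix i assume i: "i \<in> insert k I"
    have bi: "b i \<in> carrier R" using i insert by auto
    show "(u \<otimes> u') \<otimes> b i = \<zero>"
    proof (cases "i = k")
      case True then show ?thesis using u u' bi by (simp add: m_assoc)
    next
      case False
      then have "u \<otimes> b i = \<zero>" using u i by auto
      then show ?thesis using u u' bi by (simp add: m_assoc m_lcomm)
    qed
  qed
  then show ?case using mult_S u u' by blast
qed

lemma phi_minus: "a \<in> carrier R \<Longrightarrow> b \<in> carrier R \<Longrightarrow> phi (a \<ominus> b) = phi a \<ominus>\<^bsub>V\<^esub> phi b"
  by (simp add: a_minus_def)

end

lemma (in cring) alg_cancel:
  assumes "u \<in> carrier R" "X \<in> carrier R" "Y \<in> carrier R" "u \<otimes> (X \<ominus> Y) = \<zero>"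
  shows "u \<otimes> X = u \<otimes> Y"
proof -
  have "u \<otimes> X = u \<otimes> (X \<ominus> Y) \<oplus> u \<otimes> Y" using assms(1-3) by algebra
  then show ?thesis using assms by simp
qed

context locMV
begin

lemma local_T:
  assumes A1: "matok R A1 k0 k1" and A2: "matok R A2 k1 k2"
    and ex1: "\<forall>x\<in>fvec R k1. (matvec R A1 k0 k1 x = (\<lambda>_. \<zero>)) = (\<exists>z\<in>fvec R k2. x = matvec R A2 k1 k2 z)"
  shows "\<exists>\<rho>\<in>S. \<exists>T. matok R T k1 k1 \<and> (\<forall>i<k0. \<forall>c<k1. matmul R A1 T k1 i c = \<rho> \<otimes> A1 i c)
      \<and> (\<forall>r<k1. \<forall>l<k2. matmul R T A2 k1 r l = \<zero>)"
proof -
  have A1c: "\<And>i j. i < k0 \<Longrightarrow> j < k1 \<Longrightarrow> A1 i j \<in> carrier R" using A1 unfolding matok_def by auto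
  have A2c: "\<And>i j. i < k1 \<Longrightarrow> j < k2 \<Longrightarrow> A2 i j \<in> carrier R" using A2 unfolding matok_def by auto
  define a where "a = (\<lambda>l i. phi (A1 i l))"
  have aV: "\<forall>l\<in>{..<k1}. \<forall>i<k0. a l i \<in> carrier V" unfolding a_def using A1c by auto
  define f where "f = gmv V a k0 {..<k1}"
  have TR: "\<And>y. y \<in> fvec R k1 \<Longrightarrow> f (\<lambda>c. phi (y c)) = (\<lambda>i. phi (matvec R A1 k0 k1 y i))"
  proof (rule ext)
    fix y i assume y: "y \<in> fvec R k1"
    have yc: "\<And>c. c < k1 \<Longrightarrow> y c \<in> carrier R" using y unfolding fvec_def by auto
    show "f (\<lambda>c. phi (y c)) i = phi (matvec R A1 k0 k1 y i)"
    proof (cases "i < k0")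
      case True
      have "phi (\<Oplus>l\<in>{..<k1}. A1 i l \<otimes> y l) = (\<Oplus>\<^bsub>V\<^esub> l\<in>{..<k1}. (phi \<circ> (\<lambda>l. A1 i l \<otimes> y l)) l)"
        using A1c yc True by (intro H.hom_finsum) auto
      also have "\<dots> = (\<Oplus>\<^bsub>V\<^esub> l\<in>{..<k1}. a l i \<otimes>\<^bsub>V\<^esub> phi (y l))"
        using A1c yc True unfolding a_def by (intro Vr.finsum_cong') auto
      finally show ?thesis unfolding f_def gmv_def matvec_def using True by simp
    qed (simp add: f_def gmv_def matvec_def)
  qed
  have pvec: "\<And>y. y \<in> fvec R k1 \<Longrightarrow> (\<lambda>c. phi (y c)) \<in> vecs V {..<k1}"
    unfolding fvec_def vecs_def by auto
  have evf: "\<And>l. l < k2 \<Longrightarrow> ev l \<in> fvec R k2" unfolding ev_def fvec_def by auto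
  define Gv where "Gv = (\<lambda>l c. phi (matvec R A2 k1 k2 (ev l) c))"
  have colf: "\<And>l. l < k2 \<Longrightarrow> matvec R A2 k1 k2 (ev l) \<in> fvec R k1"
    using matvec_fvec[OF A2] evf unfolding fvec_def by auto
  have Gvv: "\<And>l. l < k2 \<Longrightarrow> Gv l \<in> vecs V {..<k1}" unfolding Gv_def using pvec colf by auto
  have Gvc: "\<And>l c. l < k2 \<Longrightarrow> c < k1 \<Longrightarrow> Gv l c = phi (A2 c l)"
  proof -
    fix l c assume l: "l < k2" and c: "c < k1"
    have "matvec R A2 k1 k2 (ev l) c = (\<Oplus>d\<in>{..<k2}. A2 c d \<otimes> (if d = l then \<one> else \<zero>))"
      unfolding matvec_def ev_def using c by simp
    also have "\<dots> = A2 c l" using l c A2c by (intro finsum_delta) auto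
    finally show "Gv l c = phi (A2 c l)" unfolding Gv_def by simp
  qed
  define K where "K = {x \<in> vecs V {..<k1}. f x = vzero V}"
  define G where "G = Gv ` {..<k2}"
  have GK: "G \<subseteq> K"
  proof
    fix g assume "g \<in> G"
    then obtain l where l: "l < k2" "g = Gv l" unfolding G_def by auto
    have "matvec R A1 k0 k1 (matvec R A2 k1 k2 (ev l)) = (\<lambda>_. \<zero>)"
      using ex1 colf[OF l(1)] evf[OF l(1)] by auto
    then have "f g = vzero V" using TR[OF colf[OF l(1)]] l unfolding Gv_def vzero_def by simp
    then show "g \<in> K" unfolding K_def using Gvv l by auto
  qed
  have Gsub: "G \<subseteq> vecs V {..<k1}" using GK unfolding K_def by auto
  have Kspan: "K \<subseteq> vspan V G"
  proof
    fix x assume "x \<in> K"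
    then have xv: "x \<in> vecs V {..<k1}" and fx: "f x = vzero V" unfolding K_def by auto
    have xc: "\<And>c. x c \<in> carrier V" using xv Vr.vecs_carrier by auto
    obtain s y where s: "s \<in> S" and sy: "\<forall>c\<in>{..<k1}. y c \<in> carrier R \<and> phi s \<otimes>\<^bsub>V\<^esub> x c = phi (y c)"
      using F1[of "{..<k1}" x] xc by auto
    define y' where "y' = (\<lambda>c. if c < k1 then y c else \<zero>)"
    have y'f: "y' \<in> fvec R k1" unfolding y'_def fvec_def using sy by auto
    have py': "(\<lambda>c. phi (y' c)) = vsm V (phi s) x"
    proof (rule ext)
      fix c show "phi (y' c) = vsm V (phi s) x c"
      proof (cases "c < k1")
        case True then show ?thesis unfolding y'_def vsm_def using sy by auto
      next
        case False
        then have "x c = \<zero>\<^bsub>V\<^esub>" using xv unfolding vecs_def by auto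
        then show ?thesis unfolding y'_def vsm_def using False s by simp
      qed
    qed
    have "f (\<lambda>c. phi (y' c)) = vzero V"
    proof -
      have "f (vsm V (phi s) x) = vsm V (phi s) (f x)"
        unfolding f_def using Vr.gmv_smul[OF aV xv] s by simp
      then show ?thesis using py' fx s unfolding vsm_def vzero_def by (simp add: fun_eq_iff)
    qed
    then have phz: "\<forall>i\<in>{..<k0}. matvec R A1 k0 k1 y' i \<in> carrier R \<and> phi (matvec R A1 k0 k1 y' i) = \<zero>\<^bsub>V\<^esub>"
      using TR[OF y'f] matvec_fvec[OF A1] y'f unfolding vzero_def fvec_def by (auto simp: fun_eq_iff)
    obtain u where u: "u \<in> S" "\<forall>i\<in>{..<k0}. u \<otimes> matvec R A1 k0 k1 y' i = \<zero>"
      using F2[OF _ phz] by auto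
    define uy where "uy = (\<lambda>c. u \<otimes> y' c)"
    have uyf: "uy \<in> fvec R k1" unfolding uy_def using y'f u unfolding fvec_def by auto
    have "matvec R A1 k0 k1 uy = (\<lambda>i. u \<otimes> matvec R A1 k0 k1 y' i)"
      unfolding uy_def using matvec_smul[OF A1 y'f] u by simp
    also have "\<dots> = (\<lambda>_. \<zero>)" using u by (auto simp: fun_eq_iff matvec_def)
    finally obtain z where z: "z \<in> fvec R k2" "uy = matvec R A2 k1 k2 z" using ex1 uyf by auto
    have zc: "\<And>l. l < k2 \<Longrightarrow> z l \<in> carrier R" using z unfolding fvec_def by auto
    obtain w where w: "w \<in> carrier V" "phi (u \<otimes> s) \<otimes>\<^bsub>V\<^esub> w = \<one>\<^bsub>V\<^esub>" using phi_unit mult_S u s by blast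
    have us: "u \<in> carrier R" "s \<in> carrier R" using u s by auto
    have xeq: "x = (\<lambda>c. \<Oplus>\<^bsub>V\<^esub> l\<in>{..<k2}. (w \<otimes>\<^bsub>V\<^esub> phi (z l)) \<otimes>\<^bsub>V\<^esub> Gv l c)"
    proof (rule ext)
      fix c
      show "x c = (\<Oplus>\<^bsub>V\<^esub> l\<in>{..<k2}. (w \<otimes>\<^bsub>V\<^esub> phi (z l)) \<otimes>\<^bsub>V\<^esub> Gv l c)"
      proof (cases "c < k1")
        case True
        have "(\<Oplus>\<^bsub>V\<^esub> l\<in>{..<k2}. (w \<otimes>\<^bsub>V\<^esub> phi (z l)) \<otimes>\<^bsub>V\<^esub> Gv l c)
            = (\<Oplus>\<^bsub>V\<^esub> l\<in>{..<k2}. w \<otimes>\<^bsub>V\<^esub> (phi \<circ> (\<lambda>l. A2 c l \<otimes> z l)) l)"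
          using True Gvc A2c zc w by (intro Vr.finsum_cong') (auto simp: Vr.m_ac)
        also have "\<dots> = w \<otimes>\<^bsub>V\<^esub> (\<Oplus>\<^bsub>V\<^esub> l\<in>{..<k2}. (phi \<circ> (\<lambda>l. A2 c l \<otimes> z l)) l)"
          using True A2c zc w by (intro Vr.finsum_rdistr[symmetric]) auto
        also have "(\<Oplus>\<^bsub>V\<^esub> l\<in>{..<k2}. (phi \<circ> (\<lambda>l. A2 c l \<otimes> z l)) l) = phi (\<Oplus>l\<in>{..<k2}. A2 c l \<otimes> z l)"
          using True A2c zc by (intro H.hom_finsum[symmetric]) auto
        also have "(\<Oplus>l\<in>{..<k2}. A2 c l \<otimes> z l) = uy c" using z(2) True unfolding matvec_def by simp
        also have "uy c = u \<otimes> y c" unfolding uy_def y'_def using True by simp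
        also have "phi (u \<otimes> y c) = phi u \<otimes>\<^bsub>V\<^esub> (phi s \<otimes>\<^bsub>V\<^esub> x c)" using sy True us by simp
        also have "w \<otimes>\<^bsub>V\<^esub> (phi u \<otimes>\<^bsub>V\<^esub> (phi s \<otimes>\<^bsub>V\<^esub> x c)) = (phi (u \<otimes> s) \<otimes>\<^bsub>V\<^esub> w) \<otimes>\<^bsub>V\<^esub> x c"
          using w(1) us xc by (simp add: Vr.m_ac)
        also have "\<dots> = x c" by (simp only: w(2) Vr.l_one[OF xc])
        finally show ?thesis by simp
      next
        case False
        have "(\<Oplus>\<^bsub>V\<^esub> l\<in>{..<k2}. (w \<otimes>\<^bsub>V\<^esub> phi (z l)) \<otimes>\<^bsub>V\<^esub> Gv l c) = (\<Oplus>\<^bsub>V\<^esub> l\<in>{..<k2}. \<zero>\<^bsub>V\<^esub>)"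
          using False w zc unfolding Gv_def matvec_def by (intro Vr.finsum_cong') auto
        then show ?thesis using False xv unfolding vecs_def by auto
      qed
    qed
    show "x \<in> vspan V G"
      unfolding xeq G_def using w zc Gvv
      by (intro Vr.span_sum[where J = "{..<k1}"]) auto
  qed
  obtain \<sigma> where \<sigma>: "linmap V {..<k1} \<sigma>" "\<forall>x\<in>vecs V {..<k1}. f (\<sigma> x) = f x" "\<forall>x\<in>K. \<sigma> x = vzero V"
    using Vr.local_split[OF _ aV _ GK Kspan] K_def f_def G_def by auto
  define SV where "SV = (\<lambda>r c. \<sigma> (Vr.ev c) r)"
  have sv: "\<And>x. x \<in> vecs V {..<k1} \<Longrightarrow> \<sigma> x \<in> vecs V {..<k1}" using \<sigma>(1) unfolding linmap_def by auto
  have SVc: "\<And>r c. c < k1 \<Longrightarrow> SV r c \<in> carrier V"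
    unfolding SV_def using sv Vr.ev_vecs Vr.vecs_carrier by blast
  have M1V: "\<And>i c. i < k0 \<Longrightarrow> c < k1 \<Longrightarrow> (\<Oplus>\<^bsub>V\<^esub> j\<in>{..<k1}. phi (A1 i j) \<otimes>\<^bsub>V\<^esub> SV j c) = phi (A1 i c)"
  proof -
    fix i c assume i: "i < k0" and c: "c < k1"
    have evc: "Vr.ev c \<in> vecs V {..<k1}" using Vr.ev_vecs c by auto
    have "(\<Oplus>\<^bsub>V\<^esub> j\<in>{..<k1}. phi (A1 i j) \<otimes>\<^bsub>V\<^esub> SV j c) = f (\<sigma> (Vr.ev c)) i"
      unfolding f_def gmv_def SV_def a_def using i by simp
    also have "\<dots> = f (Vr.ev c) i" using \<sigma>(2) evc by simp
    also have "\<dots> = (\<Oplus>\<^bsub>V\<^esub> j\<in>{..<k1}. phi (A1 i j) \<otimes>\<^bsub>V\<^esub> (if j = c then \<one>\<^bsub>V\<^esub> else \<zero>\<^bsub>V\<^esub>))"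
      unfolding f_def gmv_def a_def Vr.ev_def using i by simp
    also have "\<dots> = phi (A1 i c)" using i c A1c by (intro Vr.finsum_delta) auto
    finally show "(\<Oplus>\<^bsub>V\<^esub> j\<in>{..<k1}. phi (A1 i j) \<otimes>\<^bsub>V\<^esub> SV j c) = phi (A1 i c)" .
  qed
  have M2V: "\<And>r l. r < k1 \<Longrightarrow> l < k2 \<Longrightarrow> (\<Oplus>\<^bsub>V\<^esub> c\<in>{..<k1}. SV r c \<otimes>\<^bsub>V\<^esub> phi (A2 c l)) = \<zero>\<^bsub>V\<^esub>"
  proof -
    fix r l assume r: "r < k1" and l: "l < k2"
    have "Gv l \<in> K" using GK l unfolding G_def by auto
    then have "\<sigma> (Gv l) = vzero V" using \<sigma>(3) by auto
    moreover have "\<sigma> (Gv l) = (\<lambda>r. \<Oplus>\<^bsub>V\<^esub> c\<in>{..<k1}. Gv l c \<otimes>\<^bsub>V\<^esub> \<sigma> (Vr.ev c) r)"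
      using Vr.lin_expand[OF \<sigma>(1) _ Gvv[OF l]] by simp
    ultimately have "(\<Oplus>\<^bsub>V\<^esub> c\<in>{..<k1}. Gv l c \<otimes>\<^bsub>V\<^esub> \<sigma> (Vr.ev c) r) = \<zero>\<^bsub>V\<^esub>"
      unfolding vzero_def by (metis)
    moreover have "(\<Oplus>\<^bsub>V\<^esub> c\<in>{..<k1}. Gv l c \<otimes>\<^bsub>V\<^esub> \<sigma> (Vr.ev c) r) = (\<Oplus>\<^bsub>V\<^esub> c\<in>{..<k1}. SV r c \<otimes>\<^bsub>V\<^esub> phi (A2 c l))"
      using Gvc[OF l] SVc A2c l unfolding SV_def by (intro Vr.finsum_cong') (auto simp: Vr.m_comm)
    ultimately show "(\<Oplus>\<^bsub>V\<^esub> c\<in>{..<k1}. SV r c \<otimes>\<^bsub>V\<^esub> phi (A2 c l)) = \<zero>\<^bsub>V\<^esub>" by simp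
  qed
  obtain s2 Y where s2: "s2 \<in> S" and Y: "\<forall>p\<in>{..<k1} \<times> {..<k1}. Y p \<in> carrier R \<and> phi s2 \<otimes>\<^bsub>V\<^esub> SV (fst p) (snd p) = phi (Y p)"
    using F1[of "{..<k1} \<times> {..<k1}" "\<lambda>p. SV (fst p) (snd p)"] SVc by auto
  define T0 where "T0 = (\<lambda>r c. Y (r, c))"
  have T0c: "\<And>r c. r < k1 \<Longrightarrow> c < k1 \<Longrightarrow> T0 r c \<in> carrier R" using Y unfolding T0_def by auto
  have T0e: "\<And>r c. r < k1 \<Longrightarrow> c < k1 \<Longrightarrow> phi (T0 r c) = phi s2 \<otimes>\<^bsub>V\<^esub> SV r c" using Y unfolding T0_def by auto
  have s2c: "s2 \<in> carrier R" using s2 by auto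
  define b1 where "b1 = (\<lambda>p. matmul R A1 T0 k1 (fst p) (snd p) \<ominus> s2 \<otimes> A1 (fst p) (snd p))"
  have mm1c: "\<And>i c. i < k0 \<Longrightarrow> c < k1 \<Longrightarrow> matmul R A1 T0 k1 i c \<in> carrier R"
    unfolding matmul_def using A1c T0c by (auto intro!: finsum_closed)
  have B1: "\<forall>p\<in>{..<k0} \<times> {..<k1}. b1 p \<in> carrier R \<and> phi (b1 p) = \<zero>\<^bsub>V\<^esub>"
  proof
    fix p assume "p \<in> {..<k0} \<times> {..<k1}"
    then obtain i c where p: "p = (i, c)" "i < k0" "c < k1" by auto
    have "phi (matmul R A1 T0 k1 i c) = (\<Oplus>\<^bsub>V\<^esub> j\<in>{..<k1}. (phi \<circ> (\<lambda>j. A1 i j \<otimes> T0 j c)) j)"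
      unfolding matmul_def using A1c T0c p by (intro H.hom_finsum) auto
    also have "\<dots> = (\<Oplus>\<^bsub>V\<^esub> j\<in>{..<k1}. phi s2 \<otimes>\<^bsub>V\<^esub> (phi (A1 i j) \<otimes>\<^bsub>V\<^esub> SV j c))"
      using A1c T0c T0e SVc p s2c by (intro Vr.finsum_cong') (auto simp: Vr.m_ac)
    also have "\<dots> = phi s2 \<otimes>\<^bsub>V\<^esub> (\<Oplus>\<^bsub>V\<^esub> j\<in>{..<k1}. phi (A1 i j) \<otimes>\<^bsub>V\<^esub> SV j c)"
      using A1c SVc p s2c by (intro Vr.finsum_rdistr[symmetric]) auto
    also have "\<dots> = phi (s2 \<otimes> A1 i c)" using M1V p s2c A1c by simp
    finally have e: "phi (matmul R A1 T0 k1 i c) = phi (s2 \<otimes> A1 i c)" .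
    have "phi (b1 p) = phi (matmul R A1 T0 k1 i c) \<ominus>\<^bsub>V\<^esub> phi (s2 \<otimes> A1 i c)"
      unfolding b1_def p using phi_minus mm1c p s2c A1c by simp
    also have "\<dots> = \<zero>\<^bsub>V\<^esub>" unfolding e using s2c A1c p by (simp add: a_minus_def Vr.r_neg)
    finally show "b1 p \<in> carrier R \<and> phi (b1 p) = \<zero>\<^bsub>V\<^esub>" unfolding b1_def p using mm1c p s2c A1c by simp
  qed
  obtain u1 where u1: "u1 \<in> S" "\<forall>p\<in>{..<k0} \<times> {..<k1}. u1 \<otimes> b1 p = \<zero>" using F2[OF _ B1] by auto
  define b2 where "b2 = (\<lambda>p. matmul R T0 A2 k1 (fst p) (snd p))"
  have B2: "\<forall>p\<in>{..<k1} \<times> {..<k2}. b2 p \<in> carrier R \<and> phi (b2 p) = \<zero>\<^bsub>V\<^esub>"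
  proof
    fix p assume "p \<in> {..<k1} \<times> {..<k2}"
    then obtain r l where p: "p = (r, l)" "r < k1" "l < k2" by auto
    have c: "b2 p \<in> carrier R" unfolding b2_def matmul_def using p A2c T0c by (auto intro!: finsum_closed)
    have "phi (b2 p) = (\<Oplus>\<^bsub>V\<^esub> c\<in>{..<k1}. (phi \<circ> (\<lambda>c. T0 r c \<otimes> A2 c l)) c)"
      unfolding b2_def matmul_def p fst_conv snd_conv using A2c T0c p by (intro H.hom_finsum) auto
    also have "\<dots> = (\<Oplus>\<^bsub>V\<^esub> c\<in>{..<k1}. phi s2 \<otimes>\<^bsub>V\<^esub> (SV r c \<otimes>\<^bsub>V\<^esub> phi (A2 c l)))"
      using A2c T0c T0e SVc p s2c by (intro Vr.finsum_cong') (auto simp: Vr.m_ac)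
    also have "\<dots> = phi s2 \<otimes>\<^bsub>V\<^esub> (\<Oplus>\<^bsub>V\<^esub> c\<in>{..<k1}. SV r c \<otimes>\<^bsub>V\<^esub> phi (A2 c l))"
      using A2c SVc p s2c by (intro Vr.finsum_rdistr[symmetric]) auto
    also have "\<dots> = \<zero>\<^bsub>V\<^esub>" using M2V p s2c by simp
    finally show "b2 p \<in> carrier R \<and> phi (b2 p) = \<zero>\<^bsub>V\<^esub>" using c by simp
  qed
  obtain u2 where u2: "u2 \<in> S" "\<forall>p\<in>{..<k1} \<times> {..<k2}. u2 \<otimes> b2 p = \<zero>" using F2[OF _ B2] by auto
  define u where "u = u1 \<otimes> u2"
  have uS: "u \<in> S" unfolding u_def using mult_S u1 u2 by auto
  have uc: "u \<in> carrier R" "u1 \<in> carrier R" "u2 \<in> carrier R" using uS u1 u2 by auto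
  define T where "T = (\<lambda>r c. u \<otimes> T0 r c)"
  have Tok: "matok R T k1 k1" unfolding matok_def T_def using T0c uc by auto
  have mmT: "\<And>(i::nat) (c::nat) (B::nat \<Rightarrow> nat \<Rightarrow> 'a). (\<forall>j<k1. B i j \<in> carrier R) \<Longrightarrow> (\<forall>j<k1. j < k1 \<longrightarrow> T0 j c \<in> carrier R) \<Longrightarrow>
      matmul R B T k1 i c = u \<otimes> matmul R B T0 k1 i c"
  proof -
    fix i c :: nat and B :: "nat \<Rightarrow> nat \<Rightarrow> 'a" assume B: "\<forall>j<k1. B i j \<in> carrier R" and T0c': "\<forall>j<k1. j < k1 \<longrightarrow> T0 j c \<in> carrier R"
    have "(\<Oplus>j\<in>{..<k1}. B i j \<otimes> (u \<otimes> T0 j c)) = (\<Oplus>j\<in>{..<k1}. u \<otimes> (B i j \<otimes> T0 j c))"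
      using B T0c' uc by (intro finsum_cong') (auto simp: m_lcomm)
    also have "\<dots> = u \<otimes> (\<Oplus>j\<in>{..<k1}. B i j \<otimes> T0 j c)"
      using B T0c' uc by (intro finsum_rdistr[symmetric]) auto
    finally show "matmul R B T k1 i c = u \<otimes> matmul R B T0 k1 i c" unfolding matmul_def T_def by simp
  qed
  have P1: "\<forall>i<k0. \<forall>c<k1. matmul R A1 T k1 i c = (u \<otimes> s2) \<otimes> A1 i c"
  proof (intro allI impI)
    fix i c assume i: "i < k0" and c: "c < k1"
    have "matmul R A1 T k1 i c = u \<otimes> matmul R A1 T0 k1 i c" using mmT[of A1 i c] A1c T0c i c by auto
    also have "\<dots> = u2 \<otimes> (u1 \<otimes> matmul R A1 T0 k1 i c)" unfolding u_def using uc mm1c i c by (simp add: m_ac)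
    also have "u1 \<otimes> matmul R A1 T0 k1 i c = u1 \<otimes> (s2 \<otimes> A1 i c)"
      using alg_cancel[of u1 "matmul R A1 T0 k1 i c" "s2 \<otimes> A1 i c"] u1 uc mm1c i c s2c A1c
      unfolding b1_def by auto
    also have "u2 \<otimes> (u1 \<otimes> (s2 \<otimes> A1 i c)) = (u \<otimes> s2) \<otimes> A1 i c"
      unfolding u_def using uc s2c A1c i c by (simp add: m_ac)
    finally show "matmul R A1 T k1 i c = (u \<otimes> s2) \<otimes> A1 i c" .
  qed
  have P2: "\<forall>r<k1. \<forall>l<k2. matmul R T A2 k1 r l = \<zero>"
  proof (intro allI impI)
    fix r l assume r: "r < k1" and l: "l < k2"
    have "(\<Oplus>j\<in>{..<k1}. u \<otimes> T0 r j \<otimes> A2 j l) = (\<Oplus>j\<in>{..<k1}. u \<otimes> (T0 r j \<otimes> A2 j l))"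
      using T0c A2c uc r l by (intro finsum_cong') (auto simp: m_assoc)
    also have "\<dots> = u \<otimes> b2 (r, l)" unfolding b2_def matmul_def fst_conv snd_conv
      using T0c A2c uc r l by (intro finsum_rdistr[symmetric]) auto
    also have "\<dots> = u1 \<otimes> (u2 \<otimes> b2 (r, l))" unfolding u_def using uc B2 r l by (simp add: m_assoc)
    also have "\<dots> = \<zero>" using u2 r l uc by simp
    finally show "matmul R T A2 k1 r l = \<zero>" unfolding matmul_def T_def .
  qed
  have "u \<otimes> s2 \<in> S" using mult_S uS s2 by auto
  then show ?thesis using Tok P1 P2 by blast
qed

end

context cring
begin

lemma matmul_add_right:
  assumes "\<forall>j<n. B i j \<in> carrier R" "\<forall>j<n. T j c \<in> carrier R" "\<forall>j<n. T' j c \<in> carrier R"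
  shows "matmul R B (\<lambda>r c. T r c \<oplus> T' r c) n i c = matmul R B T n i c \<oplus> matmul R B T' n i c"
proof -
  have "(\<Oplus>j\<in>{..<n}. B i j \<otimes> (T j c \<oplus> T' j c)) = (\<Oplus>j\<in>{..<n}. B i j \<otimes> T j c \<oplus> B i j \<otimes> T' j c)"
    using assms by (intro finsum_cong') (auto simp: r_distr)
  also have "\<dots> = (\<Oplus>j\<in>{..<n}. B i j \<otimes> T j c) \<oplus> (\<Oplus>j\<in>{..<n}. B i j \<otimes> T' j c)"
    using assms by (intro finsum_addf) auto
  finally show ?thesis unfolding matmul_def by simp
qed

lemma matmul_add_left:
  assumes "\<forall>j<n. B j l \<in> carrier R" "\<forall>j<n. T r j \<in> carrier R" "\<forall>j<n. T' r j \<in> carrier R"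
  shows "matmul R (\<lambda>r c. T r c \<oplus> T' r c) B n r l = matmul R T B n r l \<oplus> matmul R T' B n r l"
proof -
  have "(\<Oplus>j\<in>{..<n}. (T r j \<oplus> T' r j) \<otimes> B j l) = (\<Oplus>j\<in>{..<n}. T r j \<otimes> B j l \<oplus> T' r j \<otimes> B j l)"
    using assms by (intro finsum_cong') (auto simp: l_distr)
  also have "\<dots> = (\<Oplus>j\<in>{..<n}. T r j \<otimes> B j l) \<oplus> (\<Oplus>j\<in>{..<n}. T' r j \<otimes> B j l)"
    using assms by (intro finsum_addf) auto
  finally show ?thesis unfolding matmul_def by simp
qed

lemma matmul_scale_right:
  assumes "\<forall>j<n. B i j \<in> carrier R" "\<forall>j<n. T j c \<in> carrier R" "x \<in> carrier R"
  shows "matmul R B (\<lambda>r c. x \<otimes> T r c) n i c = x \<otimes> matmul R B T n i c"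
proof -
  have "(\<Oplus>j\<in>{..<n}. B i j \<otimes> (x \<otimes> T j c)) = (\<Oplus>j\<in>{..<n}. x \<otimes> (B i j \<otimes> T j c))"
    using assms by (intro finsum_cong') (auto simp: m_lcomm)
  also have "\<dots> = x \<otimes> (\<Oplus>j\<in>{..<n}. B i j \<otimes> T j c)"
    using assms by (intro finsum_rdistr[symmetric]) auto
  finally show ?thesis unfolding matmul_def by simp
qed

lemma matmul_scale_left:
  assumes "\<forall>j<n. B j l \<in> carrier R" "\<forall>j<n. T r j \<in> carrier R" "x \<in> carrier R"
  shows "matmul R (\<lambda>r c. x \<otimes> T r c) B n r l = x \<otimes> matmul R T B n r l"
proof -
  have "(\<Oplus>j\<in>{..<n}. x \<otimes> T r j \<otimes> B j l) = (\<Oplus>j\<in>{..<n}. x \<otimes> (T r j \<otimes> B j l))"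
    using assms by (intro finsum_cong') (auto simp: m_assoc)
  also have "\<dots> = x \<otimes> (\<Oplus>j\<in>{..<n}. T r j \<otimes> B j l)"
    using assms by (intro finsum_rdistr[symmetric]) auto
  finally show ?thesis unfolding matmul_def by simp
qed

lemma global_T:
  assumes hyp: "\<forall>M. maximalideal M R \<longrightarrow> pstar_ring (localization R M)"
    and A1: "matok R A1 k0 k1" and A2: "matok R A2 k1 k2"
    and ex1: "\<forall>x\<in>fvec R k1. (matvec R A1 k0 k1 x = (\<lambda>_. \<zero>)) = (\<exists>z\<in>fvec R k2. x = matvec R A2 k1 k2 z)"
  shows "\<exists>T. matok R T k1 k1 \<and> (\<forall>i<k0. \<forall>c<k1. matmul R A1 T k1 i c = A1 i c)
      \<and> (\<forall>r<k1. \<forall>l<k2. matmul R T A2 k1 r l = \<zero>)"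
proof -
  have A1c: "\<And>i j. i < k0 \<Longrightarrow> j < k1 \<Longrightarrow> A1 i j \<in> carrier R" using A1 unfolding matok_def by auto
  have A2c: "\<And>i j. i < k1 \<Longrightarrow> j < k2 \<Longrightarrow> A2 i j \<in> carrier R" using A2 unfolding matok_def by auto
  define P where "P = (\<lambda>\<rho> T. matok R T k1 k1 \<and> (\<forall>i<k0. \<forall>c<k1. matmul R A1 T k1 i c = \<rho> \<otimes> A1 i c)
      \<and> (\<forall>r<k1. \<forall>l<k2. matmul R T A2 k1 r l = \<zero>))"
  define J where "J = {\<rho> \<in> carrier R. \<exists>T. P \<rho> T}"
  have mulJ: "\<And>x \<rho>. x \<in> carrier R \<Longrightarrow> \<rho> \<in> J \<Longrightarrow> x \<otimes> \<rho> \<in> J"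
  proof -
    fix x \<rho> assume x: "x \<in> carrier R" and "\<rho> \<in> J"
    then obtain T where \<rho>: "\<rho> \<in> carrier R" and T: "P \<rho> T" unfolding J_def by auto
    have Tc: "\<And>r c. r < k1 \<Longrightarrow> c < k1 \<Longrightarrow> T r c \<in> carrier R" using T unfolding P_def matok_def by auto
    have "P (x \<otimes> \<rho>) (\<lambda>r c. x \<otimes> T r c)"
      unfolding P_def
    proof (intro conjI allI impI)
      show "matok R (\<lambda>r c. x \<otimes> T r c) k1 k1" using Tc x unfolding matok_def by auto
    next
      fix i c assume i: "i < k0" and c: "c < k1"
      have "matmul R A1 (\<lambda>r c. x \<otimes> T r c) k1 i c = x \<otimes> matmul R A1 T k1 i c"
        using A1c Tc x i c by (intro matmul_scale_right) auto
      also have "\<dots> = x \<otimes> (\<rho> \<otimes> A1 i c)" using T i c unfolding P_def by auto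
      also have "\<dots> = (x \<otimes> \<rho>) \<otimes> A1 i c" using x \<rho> A1c i c by (simp add: m_assoc)
      finally show "matmul R A1 (\<lambda>r c. x \<otimes> T r c) k1 i c = (x \<otimes> \<rho>) \<otimes> A1 i c" .
    next
      fix r l assume r: "r < k1" and l: "l < k2"
      have "matmul R (\<lambda>r c. x \<otimes> T r c) A2 k1 r l = x \<otimes> matmul R T A2 k1 r l"
        using A2c Tc x r l by (intro matmul_scale_left) auto
      then show "matmul R (\<lambda>r c. x \<otimes> T r c) A2 k1 r l = \<zero>" using T r l x unfolding P_def by auto
    qed
    then show "x \<otimes> \<rho> \<in> J" unfolding J_def using x \<rho> by auto
  qed
  have addJ: "\<And>\<rho> \<rho>'. \<rho> \<in> J \<Longrightarrow> \<rho>' \<in> J \<Longrightarrow> \<rho> \<oplus> \<rho>' \<in> J"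
  proof -
    fix \<rho> \<rho>' assume "\<rho> \<in> J" "\<rho>' \<in> J"
    then obtain T T' where \<rho>: "\<rho> \<in> carrier R" "\<rho>' \<in> carrier R" and T: "P \<rho> T" "P \<rho>' T'" unfolding J_def by auto
    have Tc: "\<And>r c. r < k1 \<Longrightarrow> c < k1 \<Longrightarrow> T r c \<in> carrier R" "\<And>r c. r < k1 \<Longrightarrow> c < k1 \<Longrightarrow> T' r c \<in> carrier R"
      using T unfolding P_def matok_def by auto
    have "P (\<rho> \<oplus> \<rho>') (\<lambda>r c. T r c \<oplus> T' r c)"
      unfolding P_def
    proof (intro conjI allI impI)
      show "matok R (\<lambda>r c. T r c \<oplus> T' r c) k1 k1" using Tc unfolding matok_def by auto
    next
      fix i c assume i: "i < k0" and c: "c < k1"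
      have "matmul R A1 (\<lambda>r c. T r c \<oplus> T' r c) k1 i c = matmul R A1 T k1 i c \<oplus> matmul R A1 T' k1 i c"
        using A1c Tc i c by (intro matmul_add_right) auto
      also have "\<dots> = \<rho> \<otimes> A1 i c \<oplus> \<rho>' \<otimes> A1 i c" using T i c unfolding P_def by auto
      also have "\<dots> = (\<rho> \<oplus> \<rho>') \<otimes> A1 i c" using \<rho> A1c i c by (simp add: l_distr)
      finally show "matmul R A1 (\<lambda>r c. T r c \<oplus> T' r c) k1 i c = (\<rho> \<oplus> \<rho>') \<otimes> A1 i c" .
    next
      fix r l assume r: "r < k1" and l: "l < k2"
      have "matmul R (\<lambda>r c. T r c \<oplus> T' r c) A2 k1 r l = matmul R T A2 k1 r l \<oplus> matmul R T' A2 k1 r l"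
        using A2c Tc r l by (intro matmul_add_left) auto
      then show "matmul R (\<lambda>r c. T r c \<oplus> T' r c) A2 k1 r l = \<zero>" using T r l unfolding P_def by auto
    qed
    then show "\<rho> \<oplus> \<rho>' \<in> J" unfolding J_def using \<rho> by auto
  qed
  have zJ: "\<zero> \<in> J"
  proof -
    have "P \<zero> (\<lambda>r c. \<zero> \<otimes> \<one>)"
      unfolding P_def
    proof (intro conjI allI impI)
      show "matok R (\<lambda>r c. \<zero> \<otimes> \<one>) k1 k1" unfolding matok_def by auto
    next
      fix i c assume i: "i < k0" and c: "c < k1"
      have "matmul R A1 (\<lambda>r c. \<zero> \<otimes> \<one>) k1 i c = \<zero> \<otimes> matmul R A1 (\<lambda>r c. \<one>) k1 i c"
        using A1c i c by (intro matmul_scale_right) auto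
      also have "\<dots> = \<zero> \<otimes> A1 i c" using A1c i c by (simp add: matmul_def)
      finally show "matmul R A1 (\<lambda>r c. \<zero> \<otimes> \<one>) k1 i c = \<zero> \<otimes> A1 i c" .
    next
      fix r l assume r: "r < k1" and l: "l < k2"
      have "matmul R (\<lambda>r c. \<zero> \<otimes> \<one>) A2 k1 r l = \<zero> \<otimes> matmul R (\<lambda>r c. \<one>) A2 k1 r l"
        using A2c r l by (intro matmul_scale_left) auto
      moreover have "matmul R (\<lambda>r c. \<one>) A2 k1 r l \<in> carrier R"
        unfolding matmul_def using A2c l by (auto intro!: finsum_closed)
      ultimately show "matmul R (\<lambda>r c. \<zero> \<otimes> \<one>) A2 k1 r l = \<zero>" by simp
    qed
    then show ?thesis unfolding J_def by auto
  qed
  have idJ: "ideal J R"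
  proof (rule idealI[OF ring_axioms])
    show "subgroup J (add_monoid R)"
    proof
      show "J \<subseteq> carrier (add_monoid R)" unfolding J_def by auto
      show "\<one>\<^bsub>add_monoid R\<^esub> \<in> J" using zJ by simp
      fix x y assume "x \<in> J" "y \<in> J"
      then show "x \<otimes>\<^bsub>add_monoid R\<^esub> y \<in> J" using addJ by simp
    next
      fix x assume x: "x \<in> J"
      then have "(\<ominus> \<one>) \<otimes> x \<in> J" using mulJ by simp
      moreover have "(\<ominus> \<one>) \<otimes> x = \<ominus> x" using x unfolding J_def by (simp add: l_minus)
      ultimately show "inv\<^bsub>add_monoid R\<^esub> x \<in> J" by (simp add: a_inv_def)
    qed
    fix a x assume a: "a \<in> J" and x: "x \<in> carrier R"
    show "x \<otimes> a \<in> J" using mulJ a x by simp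
    have "a \<otimes> x = x \<otimes> a" using a x unfolding J_def by (simp add: m_comm)
    then show "a \<otimes> x \<in> J" using mulJ a x by simp
  qed
  have "\<one> \<in> J"
  proof (rule ccontr)
    assume "\<one> \<notin> J"
    then obtain M where M: "maximalideal M R" "J \<subseteq> M" using krull[OF idJ] by auto
    have "locMV R M"
      unfolding locMV_def locMV_axioms_def locM_def locM_axioms_def
      using is_cring M hyp by auto
    then interpret L: locMV R M .
    obtain \<rho> T where "\<rho> \<in> carrier R - M" "P \<rho> T"
      using L.local_T[OF A1 A2 ex1] unfolding P_def by blast
    then show False using M unfolding J_def by auto
  qed
  then obtain T where "P \<one> T" unfolding J_def by auto
  then show ?thesis unfolding P_def using A1c by auto
qed

end

lemma pstar_from:
  assumes v: "valuation_ring V" and dn: "domain V \<or> \<not> coherent_ring V"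
  shows "pstar_ring V"
proof -
  have cV: "cring V" using v unfolding valuation_ring_def by auto
  interpret V: cring V by (rule cV)
  have ch: "chain_cring V"
  proof (unfold_locales)
    fix a b assume a: "a \<in> carrier V" and b: "b \<in> carrier V"
    have "PIdl\<^bsub>V\<^esub> a \<subseteq> PIdl\<^bsub>V\<^esub> b \<or> PIdl\<^bsub>V\<^esub> b \<subseteq> PIdl\<^bsub>V\<^esub> a"
      using v V.cgenideal_ideal[OF a] V.cgenideal_ideal[OF b] unfolding valuation_ring_def by auto
    then show "(\<exists>c\<in>carrier V. b = a \<otimes>\<^bsub>V\<^esub> c) \<or> (\<exists>c\<in>carrier V. a = b \<otimes>\<^bsub>V\<^esub> c)"
    proof
      assume "PIdl\<^bsub>V\<^esub> a \<subseteq> PIdl\<^bsub>V\<^esub> b"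
      then have "a \<in> PIdl\<^bsub>V\<^esub> b" using V.cgenideal_self[OF a] by auto
      then obtain x where "x \<in> carrier V" "a = x \<otimes>\<^bsub>V\<^esub> b" unfolding cgenideal_def by auto
      then show ?thesis using b V.m_comm by auto
    next
      assume "PIdl\<^bsub>V\<^esub> b \<subseteq> PIdl\<^bsub>V\<^esub> a"
      then have "b \<in> PIdl\<^bsub>V\<^esub> a" using V.cgenideal_self[OF b] by auto
      then obtain x where "x \<in> carrier V" "b = x \<otimes>\<^bsub>V\<^esub> a" unfolding cgenideal_def by auto
      then show ?thesis using a V.m_comm by auto
    qed
  qed
  interpret C: chain_cring V by (rule ch)
  show ?thesis
  proof (unfold_locales)
    fix p G y assume p: "p \<in> carrier V" "p \<noteq> \<zero>\<^bsub>V\<^esub>" and G: "finite G" "G \<subseteq> annR V p" "annR V p \<subseteq> sspan V G"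
      and y: "y \<in> carrier V" "p \<otimes>\<^bsub>V\<^esub> y = \<zero>\<^bsub>V\<^esub>"
    from dn show "y = \<zero>\<^bsub>V\<^esub>"
    proof
      assume "domain V"
      then show ?thesis using domain.integral[of V p y] p y by auto
    next
      assume "\<not> coherent_ring V"
      then show ?thesis using C.pstar_noncoherent p G y by blast
    qed
  qed
qed

context cring
begin

lemma fvec_carrier: "x \<in> fvec R k \<Longrightarrow> x c \<in> carrier R"
  unfolding fvec_def by (cases "c < k") auto

lemma fvec_minus: "x \<in> fvec R k \<Longrightarrow> y \<in> fvec R k \<Longrightarrow> (\<lambda>c. x c \<ominus> y c) \<in> fvec R k"
  unfolding fvec_def by (auto simp: a_minus_def)

lemma alg_rd: "a \<in> carrier R \<Longrightarrow> x \<in> carrier R \<Longrightarrow> y \<in> carrier R \<Longrightarrow> a \<otimes> (x \<ominus> y) = a \<otimes> x \<ominus> a \<otimes> y"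
  by algebra

lemma alg_zz: "\<zero> \<ominus> \<zero> = \<zero>" by algebra

lemma alg_E: "a \<in> carrier R \<Longrightarrow> t \<in> carrier R \<Longrightarrow> x \<in> carrier R \<Longrightarrow> (a \<ominus> t) \<otimes> x = x \<otimes> a \<ominus> t \<otimes> x"
  by algebra

lemma alg_eq: "a \<in> carrier R \<Longrightarrow> b \<in> carrier R \<Longrightarrow> a \<ominus> b = \<zero> \<Longrightarrow> a = b"
proof -
  assume a: "a \<in> carrier R" and b: "b \<in> carrier R" and e: "a \<ominus> b = \<zero>"
  have "a = (a \<ominus> b) \<oplus> b" using a b by algebra
  then show "a = b" using e b by simp
qed

lemma alg_m0: "a \<in> carrier R \<Longrightarrow> a \<ominus> \<zero> = a" by algebra
lemma alg_aa: "a \<in> carrier R \<Longrightarrow> a \<ominus> a = \<zero>" by algebra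

lemma mv_carrier: "matok R A m k \<Longrightarrow> x \<in> fvec R k \<Longrightarrow> matvec R A m k x r \<in> carrier R"
  using matvec_fvec[of A m k x] fvec_carrier[of _ k] fvec_carrier[of _ m] by blast

lemma matvec_minus:
  assumes A: "matok R A m k" and x: "x \<in> fvec R k" and y: "y \<in> fvec R k"
  shows "matvec R A m k (\<lambda>c. x c \<ominus> y c) = (\<lambda>r. matvec R A m k x r \<ominus> matvec R A m k y r)"
proof (rule ext)
  fix r
  show "matvec R A m k (\<lambda>c. x c \<ominus> y c) r = matvec R A m k x r \<ominus> matvec R A m k y r"
  proof (cases "r < m")
    case True
    have Ac: "\<And>c. c < k \<Longrightarrow> A r c \<in> carrier R" using A True unfolding matok_def by auto
    have "(\<Oplus>c\<in>{..<k}. A r c \<otimes> (x c \<ominus> y c)) = (\<Oplus>c\<in>{..<k}. A r c \<otimes> x c \<ominus> A r c \<otimes> y c)"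
      using Ac x y by (intro finsum_cong') (auto simp: alg_rd fvec_carrier)
    also have "\<dots> = (\<Oplus>c\<in>{..<k}. A r c \<otimes> x c) \<ominus> (\<Oplus>c\<in>{..<k}. A r c \<otimes> y c)"
      using Ac x y by (intro finsum_minus) (auto simp: fvec_carrier)
    finally show ?thesis unfolding matvec_def using True by simp
  qed (simp add: matvec_def alg_zz)
qed

lemma resolution_exact:
  assumes A1: "matok R A1 k0 k1" and A2: "matok R A2 k1 k2"
    and ex1: "\<forall>x\<in>fvec R k1. (matvec R A1 k0 k1 x = (\<lambda>_. \<zero>)) = (\<exists>z\<in>fvec R k2. x = matvec R A2 k1 k2 z)"
    and T: "matok R T k1 k1" and MT1: "\<forall>i<k0. \<forall>c<k1. matmul R A1 T k1 i c = A1 i c"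
    and MT2: "\<forall>r<k1. \<forall>l<k2. matmul R T A2 k1 r l = \<zero>"
    and Edef: "E = (\<lambda>r c. (if r = c then \<one> else \<zero>) \<ominus> T r c)"
  shows "matok R E k1 k1"
    and "\<forall>x\<in>fvec R k1. (matvec R A1 k0 k1 x = (\<lambda>_. \<zero>)) = (\<exists>z\<in>fvec R k1. x = matvec R E k1 k1 z)"
    and "\<forall>x\<in>fvec R k1. (matvec R E k1 k1 x = (\<lambda>_. \<zero>)) = (\<exists>z\<in>fvec R k1. x = matvec R T k1 k1 z)"
    and "\<forall>x\<in>fvec R k1. (matvec R T k1 k1 x = (\<lambda>_. \<zero>)) = (\<exists>z\<in>fvec R k1. x = matvec R E k1 k1 z)"
proof -
  have Tc: "\<And>r c. r < k1 \<Longrightarrow> c < k1 \<Longrightarrow> T r c \<in> carrier R" using T unfolding matok_def by auto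
  show Eok: "matok R E k1 k1" unfolding matok_def Edef using Tc by auto
  have Tf: "\<And>x. x \<in> fvec R k1 \<Longrightarrow> matvec R T k1 k1 x \<in> fvec R k1"
    using matvec_fvec[OF T] fvec_carrier by auto
  have e1: "\<And>x. x \<in> fvec R k1 \<Longrightarrow> matvec R A1 k0 k1 (matvec R T k1 k1 x) = matvec R A1 k0 k1 x"
  proof -
    fix x assume x: "x \<in> fvec R k1"
    have "matvec R A1 k0 k1 (matvec R T k1 k1 x) = matvec R (matmul R A1 T k1) k0 k1 x"
      by (rule matvec_matvec[OF A1 T x])
    also have "\<dots> = matvec R A1 k0 k1 x"
      by (rule matvec_cong) (use MT1 A1 x in \<open>auto simp: fvec_carrier\<close>)
    finally show "matvec R A1 k0 k1 (matvec R T k1 k1 x) = matvec R A1 k0 k1 x" .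
  qed
  have e2: "\<And>z. z \<in> fvec R k2 \<Longrightarrow> matvec R T k1 k1 (matvec R A2 k1 k2 z) = (\<lambda>_. \<zero>)"
  proof -
    fix z assume z: "z \<in> fvec R k2"
    have "matvec R T k1 k1 (matvec R A2 k1 k2 z) = matvec R (matmul R T A2 k1) k1 k2 z"
      using matvec_matvec[OF T A2 z] .
    also have "\<dots> = matvec R (\<lambda>_ _. \<zero>) k1 k2 z"
      using MT2 z by (intro matvec_cong) (auto simp: matok_def fvec_carrier)
    also have "\<dots> = (\<lambda>_. \<zero>)"
    proof -
      have "\<And>r. (\<Oplus>c\<in>{..<k2}. \<zero> \<otimes> z c) = (\<Oplus>c\<in>{..<k2}. \<zero>)"
        using z by (intro finsum_cong') (auto simp: fvec_carrier)
      then show ?thesis unfolding matvec_def by (auto simp: fun_eq_iff)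
    qed
    finally show "matvec R T k1 k1 (matvec R A2 k1 k2 z) = (\<lambda>_. \<zero>)" .
  qed
  have e3: "\<And>x. x \<in> fvec R k1 \<Longrightarrow> matvec R E k1 k1 x = (\<lambda>r. x r \<ominus> matvec R T k1 k1 x r)"
  proof (rule ext)
    fix x r assume x: "x \<in> fvec R k1"
    show "matvec R E k1 k1 x r = x r \<ominus> matvec R T k1 k1 x r"
    proof (cases "r < k1")
      case True
      have "(\<Oplus>c\<in>{..<k1}. E r c \<otimes> x c) = (\<Oplus>c\<in>{..<k1}. x c \<otimes> (if c = r then \<one> else \<zero>) \<ominus> T r c \<otimes> x c)"
        unfolding Edef using True Tc x by (intro finsum_cong') (auto simp: alg_E fvec_carrier)
      also have "\<dots> = (\<Oplus>c\<in>{..<k1}. x c \<otimes> (if c = r then \<one> else \<zero>)) \<ominus> (\<Oplus>c\<in>{..<k1}. T r c \<otimes> x c)"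
        using True Tc x by (intro finsum_minus) (auto simp: fvec_carrier)
      also have "(\<Oplus>c\<in>{..<k1}. x c \<otimes> (if c = r then \<one> else \<zero>)) = x r"
        using True x by (intro finsum_delta) (auto simp: fvec_carrier)
      finally show ?thesis unfolding matvec_def using True by simp
    next
      case False
      then have "x r = \<zero>" using x unfolding fvec_def by auto
      then show ?thesis unfolding matvec_def using False by (simp add: alg_zz)
    qed
  qed
  have e5: "\<And>x. x \<in> fvec R k1 \<Longrightarrow> matvec R A1 k0 k1 x = (\<lambda>_. \<zero>) \<Longrightarrow> matvec R T k1 k1 x = (\<lambda>_. \<zero>)"
  proof -
    fix x assume x: "x \<in> fvec R k1" and k: "matvec R A1 k0 k1 x = (\<lambda>_. \<zero>)"
    obtain z where z: "z \<in> fvec R k2" "x = matvec R A2 k1 k2 z" using bspec[OF ex1 x] k by auto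
    show "matvec R T k1 k1 x = (\<lambda>_. \<zero>)" using e2[OF z(1)] z(2) by simp
  qed
  have e4: "\<And>x. x \<in> fvec R k1 \<Longrightarrow> matvec R T k1 k1 (matvec R T k1 k1 x) = matvec R T k1 k1 x"
  proof -
    fix x assume x: "x \<in> fvec R k1"
    define y where "y = (\<lambda>c. matvec R T k1 k1 x c \<ominus> x c)"
    have yf: "y \<in> fvec R k1" unfolding y_def using fvec_minus[OF Tf[OF x] x] .
    have "matvec R A1 k0 k1 y = (\<lambda>i. matvec R A1 k0 k1 (matvec R T k1 k1 x) i \<ominus> matvec R A1 k0 k1 x i)"
      unfolding y_def using matvec_minus[OF A1 Tf[OF x] x] .
    also have "\<dots> = (\<lambda>_. \<zero>)" using e1[OF x] mv_carrier[OF A1 x] by (auto simp: fun_eq_iff alg_aa)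
    finally have "matvec R T k1 k1 y = (\<lambda>_. \<zero>)" using e5[OF yf] by simp
    then have "(\<lambda>r. matvec R T k1 k1 (matvec R T k1 k1 x) r \<ominus> matvec R T k1 k1 x r) = (\<lambda>_. \<zero>)"
      unfolding y_def using matvec_minus[OF T Tf[OF x] x] by simp
    then show "matvec R T k1 k1 (matvec R T k1 k1 x) = matvec R T k1 k1 x"
      using alg_eq Tf[OF x] Tf[OF Tf[OF x]] fvec_carrier by (auto simp: fun_eq_iff)
  qed
  show "\<forall>x\<in>fvec R k1. (matvec R A1 k0 k1 x = (\<lambda>_. \<zero>)) = (\<exists>z\<in>fvec R k1. x = matvec R E k1 k1 z)"
  proof (intro ballI iffI)
    fix x assume x: "x \<in> fvec R k1" and k: "matvec R A1 k0 k1 x = (\<lambda>_. \<zero>)"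
    have "matvec R E k1 k1 x = x" using e3[OF x] e5[OF x k] x fvec_carrier by (auto simp: fun_eq_iff alg_m0)
    then show "\<exists>z\<in>fvec R k1. x = matvec R E k1 k1 z" using x by (intro bexI[of _ x]) auto
  next
    fix x assume x: "x \<in> fvec R k1" and "\<exists>z\<in>fvec R k1. x = matvec R E k1 k1 z"
    then obtain z where z: "z \<in> fvec R k1" "x = matvec R E k1 k1 z" by auto
    have "matvec R A1 k0 k1 x = matvec R A1 k0 k1 (\<lambda>c. z c \<ominus> matvec R T k1 k1 z c)" using z e3 by simp
    also have "\<dots> = (\<lambda>i. matvec R A1 k0 k1 z i \<ominus> matvec R A1 k0 k1 (matvec R T k1 k1 z) i)"
      using matvec_minus[OF A1 z(1) Tf[OF z(1)]] .
    also have "\<dots> = (\<lambda>_. \<zero>)" using e1[OF z(1)] mv_carrier[OF A1 z(1)] by (auto simp: fun_eq_iff alg_aa)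
    finally show "matvec R A1 k0 k1 x = (\<lambda>_. \<zero>)" .
  qed
  show "\<forall>x\<in>fvec R k1. (matvec R E k1 k1 x = (\<lambda>_. \<zero>)) = (\<exists>z\<in>fvec R k1. x = matvec R T k1 k1 z)"
  proof (intro ballI iffI)
    fix x assume x: "x \<in> fvec R k1" and k: "matvec R E k1 k1 x = (\<lambda>_. \<zero>)"
    have "x = matvec R T k1 k1 x"
    proof (rule ext)
      fix r
      have "matvec R E k1 k1 x r = \<zero>" using k by simp
      then have "x r \<ominus> matvec R T k1 k1 x r = \<zero>" using e3[OF x] by simp
      then show "x r = matvec R T k1 k1 x r" using alg_eq[OF fvec_carrier[OF x] fvec_carrier[OF Tf[OF x]]] by simp
    qed
    then show "\<exists>z\<in>fvec R k1. x = matvec R T k1 k1 z" using x by (intro bexI[of _ x]) auto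
  next
    fix x assume x: "x \<in> fvec R k1" and "\<exists>z\<in>fvec R k1. x = matvec R T k1 k1 z"
    then obtain z where z: "z \<in> fvec R k1" "x = matvec R T k1 k1 z" by auto
    have "matvec R E k1 k1 x = (\<lambda>r. x r \<ominus> matvec R T k1 k1 x r)" using e3[OF x] .
    also have "\<dots> = (\<lambda>r. matvec R T k1 k1 z r \<ominus> matvec R T k1 k1 (matvec R T k1 k1 z) r)" using z(2) by simp
    also have "\<dots> = (\<lambda>_. \<zero>)" using e4[OF z(1)] mv_carrier[OF T z(1)] by (auto simp: fun_eq_iff alg_aa)
    finally show "matvec R E k1 k1 x = (\<lambda>_. \<zero>)" .
  qed
  show "\<forall>x\<in>fvec R k1. (matvec R T k1 k1 x = (\<lambda>_. \<zero>)) = (\<exists>z\<in>fvec R k1. x = matvec R E k1 k1 z)"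
  proof (intro ballI iffI)
    fix x assume x: "x \<in> fvec R k1" and k: "matvec R T k1 k1 x = (\<lambda>_. \<zero>)"
    have "matvec R E k1 k1 x = x" using e3[OF x] k x fvec_carrier by (auto simp: fun_eq_iff alg_m0)
    then show "\<exists>z\<in>fvec R k1. x = matvec R E k1 k1 z" using x by (intro bexI[of _ x]) auto
  next
    fix x assume x: "x \<in> fvec R k1" and "\<exists>z\<in>fvec R k1. x = matvec R E k1 k1 z"
    then obtain z where z: "z \<in> fvec R k1" "x = matvec R E k1 k1 z" by auto
    have "matvec R T k1 k1 x = matvec R T k1 k1 (\<lambda>c. z c \<ominus> matvec R T k1 k1 z c)" using z e3 by simp
    also have "\<dots> = (\<lambda>i. matvec R T k1 k1 z i \<ominus> matvec R T k1 k1 (matvec R T k1 k1 z) i)"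
      using matvec_minus[OF T z(1) Tf[OF z(1)]] .
    also have "\<dots> = (\<lambda>_. \<zero>)" using e4[OF z(1)] mv_carrier[OF T z(1)] by (auto simp: fun_eq_iff alg_aa)
    finally show "matvec R T k1 k1 x = (\<lambda>_. \<zero>)" .
  qed
qed

end

theorem corollary2p13:
  fixes R :: "'a ring" and E :: "('a, 'b) module"
  assumes "cring R"
    and "arithmetic_ring R"
    and "\<forall>M. maximalideal M R \<longrightarrow>
           domain (localization R M) \<or> \<not> coherent_ring (localization R M)"
    and "module R E"
    and "lambda_ge R E 2"
  shows "lambda_infinite R E"
proof -
  interpret cring R by fact
  have hyp: "\<forall>M. maximalideal M R \<longrightarrow> pstar_ring (localization R M)"
    using assms(2,3) pstar_from unfolding arithmetic_ring_def by blast
  obtain k :: "nat \<Rightarrow> nat" and A :: "nat \<Rightarrow> nat \<Rightarrow> nat \<Rightarrow> 'a" and g :: "nat \<Rightarrow> 'b" where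
    g: "\<forall>j < k 0. g j \<in> carrier E" and
    Ac: "\<forall>i\<in>{1..2::nat}. \<forall>r < k (i - 1). \<forall>c < k i. A i r c \<in> carrier R" and
    surj: "\<forall>y \<in> carrier E. \<exists>x \<in> fvec R (k 0). y = lincomb E (k 0) g x" and
    ex0: "1 \<le> (2::nat) \<longrightarrow> (\<forall>x \<in> fvec R (k 0).
            lincomb E (k 0) g x = \<zero>\<^bsub>E\<^esub> \<longleftrightarrow> (\<exists>z \<in> fvec R (k 1). x = matvec R (A 1) (k 0) (k 1) z))" and
    exi: "\<forall>i. 1 \<le> i \<and> i < (2::nat) \<longrightarrow> (\<forall>x \<in> fvec R (k i).
            matvec R (A i) (k (i - 1)) (k i) x = (\<lambda>_. \<zero>\<^bsub>R\<^esub>) \<longleftrightarrow>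
            (\<exists>z \<in> fvec R (k (Suc i)). x = matvec R (A (Suc i)) (k i) (k (Suc i)) z))"
    using assms(5) unfolding lambda_ge_def by (elim exE conjE) (rule that; assumption)
  have A1ok: "matok R (A 1) (k 0) (k 1)" using Ac unfolding matok_def by fastforce
  have A2ok: "matok R (A 2) (k 1) (k 2)"
  proof -
    have "\<forall>r < k (2 - 1). \<forall>c < k 2. A 2 r c \<in> carrier R" using Ac by auto
    then show ?thesis unfolding matok_def by simp
  qed
  have ex1: "\<forall>x\<in>fvec R (k 1). (matvec R (A 1) (k 0) (k 1) x = (\<lambda>_. \<zero>\<^bsub>R\<^esub>)) =
      (\<exists>z\<in>fvec R (k 2). x = matvec R (A 2) (k 1) (k 2) z)"
    using exi[rule_format, of 1] by (simp add: numeral_2_eq_2)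
  obtain T where T: "matok R T (k 1) (k 1)" "\<forall>i<k 0. \<forall>c<k 1. matmul R (A 1) T (k 1) i c = A 1 i c"
      "\<forall>r<k 1. \<forall>l<k 2. matmul R T (A 2) (k 1) r l = \<zero>\<^bsub>R\<^esub>"
    using global_T[OF hyp A1ok A2ok ex1] by blast
  define Em where "Em = (\<lambda>r c. (if r = c then \<one>\<^bsub>R\<^esub> else \<zero>\<^bsub>R\<^esub>) \<ominus>\<^bsub>R\<^esub> T r c)"
  note RE = resolution_exact[OF A1ok A2ok ex1 T Em_def]
  define k' where "k' = (\<lambda>i::nat. if i = 0 then k 0 else k 1)"
  define A' where "A' = (\<lambda>i::nat. if i = 1 then A 1 else if even i then Em else T)"
  have "lambda_ge R E n" for n
    unfolding lambda_ge_def
  proof (intro exI[of _ k'] exI[of _ A'] exI[of _ g] conjI)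
    show "\<forall>j<k' 0. g j \<in> carrier E" using g unfolding k'_def by simp
    show "\<forall>i\<in>{1..n}. \<forall>r<k' (i - 1). \<forall>c<k' i. A' i r c \<in> carrier R"
    proof (intro ballI allI impI)
      fix i r c assume i: "i \<in> {1..n}" and r: "r < k' (i - 1)" and c: "c < k' i"
      show "A' i r c \<in> carrier R"
      proof (cases "i = 1")
        case True then show ?thesis using A1ok r c unfolding A'_def k'_def matok_def by simp
      next
        case False
        then have "r < k 1" "c < k 1" "i \<noteq> 1" using i r c unfolding k'_def by auto
        then show ?thesis using RE(1) T(1) unfolding A'_def matok_def by auto
      qed
    qed
    show "\<forall>y\<in>carrier E. \<exists>x\<in>fvec R (k' 0). y = lincomb E (k' 0) g x" using surj unfolding k'_def by simp
    show "1 \<le> n \<longrightarrow> (\<forall>x\<in>fvec R (k' 0). (lincomb E (k' 0) g x = \<zero>\<^bsub>E\<^esub>) =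
        (\<exists>z\<in>fvec R (k' 1). x = matvec R (A' 1) (k' 0) (k' 1) z))"
      using ex0 unfolding k'_def A'_def by simp
    show "\<forall>i. 1 \<le> i \<and> i < n \<longrightarrow> (\<forall>x\<in>fvec R (k' i). (matvec R (A' i) (k' (i - 1)) (k' i) x = (\<lambda>_. \<zero>\<^bsub>R\<^esub>)) =
        (\<exists>z\<in>fvec R (k' (Suc i)). x = matvec R (A' (Suc i)) (k' i) (k' (Suc i)) z))"
    proof (intro allI impI)
      fix i assume i: "1 \<le> i \<and> i < n"
      show "\<forall>x\<in>fvec R (k' i). (matvec R (A' i) (k' (i - 1)) (k' i) x = (\<lambda>_. \<zero>\<^bsub>R\<^esub>)) =
        (\<exists>z\<in>fvec R (k' (Suc i)). x = matvec R (A' (Suc i)) (k' i) (k' (Suc i)) z)"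
      proof (cases "i = 1")
        case True
        then show ?thesis using RE(2) unfolding k'_def A'_def by simp
      next
        case False
        then have i2: "i \<ge> 2" using i by auto
        have kk: "k' i = k 1" "k' (i - 1) = k 1" "k' (Suc i) = k 1" using i2 unfolding k'_def by auto
        show ?thesis
        proof (cases "even i")
          case True
          have "A' i = Em" "A' (Suc i) = T" using True i2 unfolding A'_def by auto
          then show ?thesis using RE(3) kk by simp
        next
          case False
          have "A' i = T" "A' (Suc i) = Em" using False i2 unfolding A'_def by auto
          then show ?thesis using RE(4) kk by simp
        qed
      qed
    qed
  qed
  then show ?thesis unfolding lambda_infinite_def by blast
qed


end
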